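(* For all integers $2\le k\le n$, \[ \mathbb{P}_n(W_k\cap W_{k-1})=\frac{k}{n}-\frac{3}{2n}+\frac{(n-k+1)^2}{4n(n-1)}, \] i.e. this is the probability that both the $(k-1)$-th and $k$-th boundary steps of a uniformly random type-B permutation tableau of size $n$ are west steps.
   Context: A Ferrers diagram is a left-justified array of cells whose row lengths weakly decrease from top to bottom (rows of length $0$ are allowed). Its half-perimeter is the number of rows plus the number of columns. Its southeast boundary, traversed from the northeast corner to the southwest corner, consists of $n$ unit steps, each south or west; south steps correspond to rows and west steps to columns. We write $S_k$ (resp. $W_k$) for the event that the $k$-th step is south (resp. west). If the diagram has $c$ columns, the shifted Ferrers diagram is obtained by inserting $c$ new left-justified rows above it, of lengths $c,c-1,\dots,1$ from top to bottom; the rightmost cell of each inserted row is a diagonal cell. A type-B permutation tableau of size $n$ is a filling of a shifted Ferrers diagram of half-perimeter $n$ with $0$'s and $1$'s such that: (1) every column contains at least one $1$; (2) no $0$ has both a $1$ above it in its column and a $1$ to its left in its row; (3) if a diagonal cell contains $0$ then every cell of its row contains $0$. The boundary steps of the shifted diagram are those of the underlying Ferrers diagram. Let $\mathcal{B}_n$ be the set of such tableaux and $\mathbb{P}_n$ the uniform probability measure on $\mathcal{B}_n$. *)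

theory Defs
  imports Complex_Main
begin

text \<open>A Ferrers diagram of half-perimeter n is encoded by its southeast boundary word
  w :: bool list of length n, read from the northeast corner to the southwest corner;
  the k-th step (1-based) is w ! (k - 1), with True = south step (a row) and
  False = west step (a column).\<close>

definition south_step :: "bool list \<Rightarrow> nat \<Rightarrow> bool" where
  "south_step w k = (w ! (k - 1))"

definition west_step :: "bool list \<Rightarrow> nat \<Rightarrow> bool" where
  "west_step w k = (\<not> w ! (k - 1))"

fun rowlens :: "bool list \<Rightarrow> nat list" where
  "rowlens [] = []"
| "rowlens (True # w) = length (filter Not w) # rowlens w"
| "rowlens (False # w) = rowlens w"

definition ncols :: "bool list \<Rightarrow> nat" where
  "ncols w = length (filter Not w)"

text \<open>Cells (row, column) of the shifted diagram, rows numbered from 0 at the top and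
  columns from 0 at the left. Rows 0..c-1 are the inserted staircase rows (row i
  occupies columns i..c-1, lengths c, c-1, ..., 1 from top to bottom; its diagonal
  cell is (i,i), the topmost cell of column i); row c + r is the r-th row of the
  Ferrers diagram.\<close>
definition shifted_cells :: "bool list \<Rightarrow> (nat \<times> nat) set" where
  "shifted_cells w =
     {(i, j). i < ncols w \<and> i \<le> j \<and> j < ncols w}
     \<union> {(i, j). ncols w \<le> i \<and> i - ncols w < length (rowlens w)
               \<and> j < rowlens w ! (i - ncols w)}"

text \<open>A filling is given by the set F of cells containing 1.\<close>
definition is_typeB_tableau :: "bool list \<Rightarrow> (nat \<times> nat) set \<Rightarrow> bool" where
  "is_typeB_tableau w F \<longleftrightarrow>
     F \<subseteq> shifted_cells w
     \<and> (\<forall>j < ncols w. \<exists>i. (i, j) \<in> F)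
     \<and> (\<forall>i j. (i, j) \<in> shifted_cells w - F \<longrightarrow>
            \<not> ((\<exists>i' < i. (i', j) \<in> F) \<and> (\<exists>j' < j. (i, j') \<in> F)))
     \<and> (\<forall>i < ncols w. (i, i) \<notin> F \<longrightarrow> (\<forall>j. (i, j) \<notin> F))"

definition typeB_tableaux :: "nat \<Rightarrow> (bool list \<times> (nat \<times> nat) set) set" where
  "typeB_tableaux n = {(w, F). length w = n \<and> is_typeB_tableau w F}"

definition prob_B :: "nat \<Rightarrow> (bool list \<times> (nat \<times> nat) set \<Rightarrow> bool) \<Rightarrow> real" where
  "prob_B n P = real (card {t \<in> typeB_tableaux n. P t}) / real (card (typeB_tableaux n))"

end

theory Submission
  imports Defs
begin


definition dm :: "bool list \<Rightarrow> (nat \<times> nat) set \<Rightarrow> nat" where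
  "dm w F = card {i. i < ncols w \<and> (i, i) \<in> F}"

definition NN :: "bool list \<Rightarrow> nat \<Rightarrow> nat" where
  "NN w m = card {F. is_typeB_tableau w F \<and> dm w F = m}"

lemma ncols_append[simp]: "ncols (u @ v) = ncols u + ncols v"
  by (simp add: ncols_def)
lemma ncols_Cons[simp]: "ncols (True # w) = ncols w" "ncols (False # w) = Suc (ncols w)" "ncols [] = 0"
  by (simp_all add: ncols_def)

lemma rowlens_append: "rowlens (u @ v) = map (\<lambda>l. l + ncols v) (rowlens u) @ rowlens v"
proof (induction u)
  case Nil then show ?case by simp
next
  case (Cons a u) then show ?case by (cases a) (simp_all add: ncols_def)
qed

lemma rowlens_le: "l \<in> set (rowlens w) \<Longrightarrow> l \<le> ncols w"
proof (induction w rule: rowlens.induct)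
  case 1 then show ?case by simp
next
  case (2 w) then show ?case by (auto simp: ncols_def)
next
  case (3 w) then show ?case by (auto simp: ncols_def)
qed

lemma ncols_le_length: "ncols w \<le> length w"
  by (simp add: ncols_def)

definition LL :: "bool list \<Rightarrow> nat \<Rightarrow> nat" where
  "LL w i = (if ncols w \<le> i \<and> i - ncols w < length (rowlens w) then rowlens w ! (i - ncols w) else 0)"

lemma LL_le: "LL w i \<le> ncols w"
  unfolding LL_def using rowlens_le nth_mem by fastforce

lemma cells_iff: "(i, j) \<in> shifted_cells w \<longleftrightarrow> (i < ncols w \<and> i \<le> j \<and> j < ncols w) \<or> (ncols w \<le> i \<and> j < LL w i)"
  unfolding shifted_cells_def LL_def by auto

lemma cells_col: "(i, j) \<in> shifted_cells w \<Longrightarrow> j < ncols w"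
  using cells_iff[of i j w] LL_le[of w i] by auto

lemma finite_cells: "finite (shifted_cells w)"
proof -
  have b: "i < ncols w + length (rowlens w) \<and> j < ncols w" if "(i, j) \<in> shifted_cells w" for i j
    using cells_col[OF that] that unfolding cells_iff LL_def by (auto split: if_splits)
  have "shifted_cells w \<subseteq> {..<ncols w + length (rowlens w)} \<times> {..<ncols w}"
    using b by auto
  then show ?thesis by (rule finite_subset) simp
qed

lemma finite_tab: "finite {F. is_typeB_tableau w F}"
proof -
  have "{F. is_typeB_tableau w F} \<subseteq> Pow (shifted_cells w)"
    unfolding is_typeB_tableau_def by auto
  then show ?thesis by (rule finite_subset) (simp add: finite_cells)
qed

lemma dm_le: "is_typeB_tableau w F \<Longrightarrow> dm w F \<le> length w"
proof -
  have "dm w F \<le> card {..<ncols w}" unfolding dm_def by (rule card_mono) auto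
  then show ?thesis using ncols_le_length[of w] by simp
qed

lemma NN_nil: "NN [] m = (if m = 0 then 1 else 0)"
proof -
  have c: "shifted_cells [] = {}" by (auto simp: cells_iff LL_def)
  have t: "is_typeB_tableau [] F \<longleftrightarrow> F = {}" for F
    unfolding is_typeB_tableau_def c by simp
  have "{F. is_typeB_tableau [] F \<and> dm [] F = m} = (if m = 0 then {{}} else {})"
    using t by (auto simp: dm_def)
  then show ?thesis by (simp add: NN_def)
qed

lemma tab_cong: "ncols w1 = ncols w2 \<Longrightarrow> shifted_cells w1 = shifted_cells w2 \<Longrightarrow> is_typeB_tableau w1 F = is_typeB_tableau w2 F"
  unfolding is_typeB_tableau_def by simp

lemma NN_snoc_S: "NN (u @ [True]) m = NN u m"
proof -
  have n: "ncols (u @ [True]) = ncols u" by simp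
  have r: "rowlens (u @ [True]) = rowlens u @ [0]" by (simp add: rowlens_append)
  have "LL (u @ [True]) i = LL u i" for i
    unfolding LL_def n r by (auto simp: nth_append)
  then have "shifted_cells (u @ [True]) = shifted_cells u"
    by (auto simp: cells_iff n)
  then have "is_typeB_tableau (u @ [True]) F = is_typeB_tableau u F" for F using tab_cong n by blast
  moreover have "dm (u @ [True]) F = dm u F" for F by (simp add: dm_def)
  ultimately show ?thesis by (simp add: NN_def)
qed



definition sig :: "nat \<Rightarrow> nat \<Rightarrow> nat" where "sig c i = (if i < c then i else Suc i)"

lemma sig_less_iff[simp]: "sig c a < sig c b \<longleftrightarrow> a < b"
  by (auto simp: sig_def)
lemma sig_eq_iff[simp]: "sig c a = sig c b \<longleftrightarrow> a = b"
  by (auto simp: sig_def)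
lemma sig_ne[simp]: "sig c a \<noteq> c"
  by (auto simp: sig_def)
lemma sig_ne2[simp]: "c \<noteq> sig c a"
  by (auto simp: sig_def)
lemma sig_lt_c[simp]: "sig c a < c \<longleftrightarrow> a < c"
  by (auto simp: sig_def)
lemma sig_eq_low2: "b < c \<Longrightarrow> b = sig c a \<longleftrightarrow> a = b"
  by (auto simp: sig_def)
lemma sig_lt_Suc_c[simp]: "sig c a < Suc c \<longleftrightarrow> a < c"
  by (auto simp: sig_def)
lemma sig_low[simp]: "a < c \<Longrightarrow> sig c a = a"
  by (auto simp: sig_def)
lemma sig_eq_low: "b < c \<Longrightarrow> sig c a = b \<longleftrightarrow> a = b"
  by (auto simp: sig_def)

lemma LL_W: "LL (False # u) i = (if Suc (ncols u) \<le> i then LL u (i - 1) else 0)"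
  unfolding LL_def by (auto simp: Suc_diff_Suc)

lemma cellsW: "(a, b) \<in> shifted_cells (False # u) \<longleftrightarrow>
   (b = ncols u \<and> a \<le> ncols u) \<or> (\<exists>i. a = sig (ncols u) i \<and> (i, b) \<in> shifted_cells u)"
  (is "?L \<longleftrightarrow> ?R")
proof
  let ?c = "ncols u"
  assume ?L
  then consider (st) "a < Suc ?c" "a \<le> b" "b < Suc ?c" | (fe) "Suc ?c \<le> a" "b < LL u (a - 1)"
    unfolding cells_iff LL_W by (auto split: if_splits)
  then show ?R
  proof cases
    case st
    show ?thesis
    proof (cases "b = ?c")
      case True then show ?thesis using st by simp
    next
      case False
      then have "a < ?c" "b < ?c" using st by auto
      then show ?thesis using st by (intro disjI2 exI[of _ a]) (simp add: cells_iff)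
    qed
  next
    case fe
    then have "a = sig ?c (a - 1)" by (auto simp: sig_def)
    moreover have "(a - 1, b) \<in> shifted_cells u" using fe by (auto simp: cells_iff)
    ultimately show ?thesis by blast
  qed
next
  let ?c = "ncols u"
  assume ?R
  then consider (nc) "b = ?c" "a \<le> ?c" | (old) i where "a = sig ?c i" "(i, b) \<in> shifted_cells u" by blast
  then show ?L
  proof cases
    case nc then show ?thesis by (simp add: cells_iff)
  next
    case old
    then consider "i < ?c" "i \<le> b" "b < ?c" | "?c \<le> i" "b < LL u i" unfolding cells_iff by blast
    then show ?thesis
    proof cases
      case 1 then show ?thesis using old by (simp add: cells_iff)
    next
      case 2 then show ?thesis using old by (simp add: cells_iff LL_W sig_def)
    qed
  qed
qed

definition PhiE :: "nat \<Rightarrow> (nat \<times> nat) set \<Rightarrow> nat set \<Rightarrow> (nat \<times> nat) set" where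
  "PhiE c F X = (\<lambda>(i, j). (sig c i, j)) ` F \<union> (\<lambda>i. (i, c)) ` X"

lemma PhiE_mem: "(a, b) \<in> PhiE c F X \<longleftrightarrow> (b = c \<and> a \<in> X) \<or> (\<exists>i. a = sig c i \<and> (i, b) \<in> F)"
  unfolding PhiE_def by auto

definition extD :: "nat \<Rightarrow> nat set \<Rightarrow> nat set \<Rightarrow> bool" where
  "extD c D X \<longleftrightarrow> X \<subseteq> {..c} \<and> X \<noteq> {} \<and> (\<forall>i\<in>X. i < c \<longrightarrow> i \<in> D) \<and> (\<forall>i\<in>D. i \<notin> X \<longrightarrow> (\<forall>i'\<in>X. \<not> i' < i))"

definition diagset :: "nat \<Rightarrow> (nat \<times> nat) set \<Rightarrow> nat set" where
  "diagset c F = {i. i < c \<and> (i, i) \<in> F}"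

lemma row_diag:
  assumes "is_typeB_tableau w F" "i < ncols w" "(i, j) \<in> F"
  shows "(i, i) \<in> F"
  using assms unfolding is_typeB_tableau_def by blast

lemma tab_cols: "is_typeB_tableau w F \<Longrightarrow> (i, j) \<in> F \<Longrightarrow> j < ncols w"
  unfolding is_typeB_tableau_def using cells_col by blast

lemma PhiE_valid:
  assumes F: "is_typeB_tableau u F" and X: "extD (ncols u) (diagset (ncols u) F) X"
  shows "is_typeB_tableau (False # u) (PhiE (ncols u) F X)"
proof -
  let ?c = "ncols u" let ?H = "PhiE ?c F X"
  have Fc: "F \<subseteq> shifted_cells u" and F1: "\<forall>j < ?c. \<exists>i. (i, j) \<in> F"
    and F2: "\<forall>i j. (i, j) \<in> shifted_cells u - F \<longrightarrow> \<not> ((\<exists>i' < i. (i', j) \<in> F) \<and> (\<exists>j' < j. (i, j') \<in> F))"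
    and F3: "\<forall>i < ?c. (i, i) \<notin> F \<longrightarrow> (\<forall>j. (i, j) \<notin> F)"
    using F unfolding is_typeB_tableau_def by blast+
  have Xc: "X \<subseteq> {..?c}" and Xne: "X \<noteq> {}" and XD: "\<forall>i\<in>X. i < ?c \<longrightarrow> (i, i) \<in> F"
    and Xup: "\<forall>i. i < ?c \<longrightarrow> (i, i) \<in> F \<longrightarrow> i \<notin> X \<longrightarrow> (\<forall>i'\<in>X. \<not> i' < i)"
    using X unfolding extD_def diagset_def by auto
  have Fcol: "(i, j) \<in> F \<Longrightarrow> j < ?c" for i j using tab_cols[OF F] by blast
  have c1: "?H \<subseteq> shifted_cells (False # u)"
  proof
    fix p assume "p \<in> ?H"
    then obtain a b where p: "p = (a, b)" "(a, b) \<in> ?H" by (cases p) auto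
    from p(2) consider "b = ?c" "a \<in> X" | i where "a = sig ?c i" "(i, b) \<in> F" unfolding PhiE_mem by blast
    then have "(a, b) \<in> shifted_cells (False # u)"
    proof cases
      case 1 then show ?thesis using Xc by (auto simp: cellsW)
    next
      case 2 then show ?thesis using Fc unfolding cellsW by blast
    qed
    then show "p \<in> shifted_cells (False # u)" using p by simp
  qed
  have c2: "\<forall>j < ncols (False # u). \<exists>i. (i, j) \<in> ?H"
  proof (intro allI impI)
    fix j assume "j < ncols (False # u)"
    then have "j < ?c \<or> j = ?c" by auto
    then show "\<exists>i. (i, j) \<in> ?H"
    proof
      assume "j < ?c" then obtain i where "(i, j) \<in> F" using F1 by blast
      then show ?thesis by (auto simp: PhiE_mem)
    next
      assume "j = ?c" then obtain i where "i \<in> X" using Xne by blast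
      then show ?thesis using \<open>j = ?c\<close> by (auto simp: PhiE_mem)
    qed
  qed
  have c3: "\<forall>a b. (a, b) \<in> shifted_cells (False # u) - ?H \<longrightarrow> \<not> ((\<exists>i' < a. (i', b) \<in> ?H) \<and> (\<exists>j' < b. (a, j') \<in> ?H))"
  proof (intro allI impI notI)
    fix a b assume ab: "(a, b) \<in> shifted_cells (False # u) - ?H"
      and ex: "(\<exists>i' < a. (i', b) \<in> ?H) \<and> (\<exists>j' < b. (a, j') \<in> ?H)"
    then obtain i' j' where i': "i' < a" "(i', b) \<in> ?H" and j': "j' < b" "(a, j') \<in> ?H" by blast
    show False
    proof (cases "b = ?c")
      case True
      then have aX: "a \<notin> X" using ab by (auto simp: PhiE_mem)
      have "i' \<in> X" using i' True Fcol by (auto simp: PhiE_mem)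
      from j' True obtain i0 where i0: "a = sig ?c i0" "(i0, j') \<in> F" by (auto simp: PhiE_mem)
      have "a \<le> ?c" using ab True cellsW[of a b u] Fc Fcol by (auto dest: cells_col)
      then have "a < ?c" using i0 by (metis le_neq_implies_less sig_ne)
      then have "i0 = a" using i0 by (auto simp: sig_def split: if_splits)
      then have "(a, a) \<in> F" using i0 row_diag[OF F \<open>a < ?c\<close>] by blast
      then show False using Xup \<open>a < ?c\<close> aX \<open>i' \<in> X\<close> i' by blast
    next
      case False
      from ab False obtain i0 where i0: "a = sig ?c i0" "(i0, b) \<in> shifted_cells u" by (auto simp: cellsW)
      have "b < ?c" using i0 cells_col by blast
      have nF: "(i0, b) \<notin> F" using ab i0 by (auto simp: PhiE_mem)
      from i' False obtain i1 where i1: "i' = sig ?c i1" "(i1, b) \<in> F" by (auto simp: PhiE_mem)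
      have "j' \<noteq> ?c" using j' \<open>b < ?c\<close> by simp
      with j' obtain i2 where i2: "a = sig ?c i2" "(i2, j') \<in> F" by (auto simp: PhiE_mem)
      have "i2 = i0" using i0 i2 by simp
      have "i1 < i0" using i1 i0 i' by simp
      show False using F2 i0 nF i1 i2 \<open>i2 = i0\<close> \<open>i1 < i0\<close> j' by blast
    qed
  qed
  have c4: "\<forall>i < ncols (False # u). (i, i) \<notin> ?H \<longrightarrow> (\<forall>j. (i, j) \<notin> ?H)"
  proof (intro allI impI)
    fix i j assume i: "i < ncols (False # u)" and nd: "(i, i) \<notin> ?H"
    show "(i, j) \<notin> ?H"
    proof (cases "i = ?c")
      case True then show ?thesis using nd by (auto simp: PhiE_mem)
    next
      case False
      then have ic: "i < ?c" using i by simp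
      have "(i, i) \<notin> F"
      proof
        assume "(i, i) \<in> F"
        then have "(sig ?c i, i) \<in> ?H" unfolding PhiE_mem by blast
        then show False using nd ic by simp
      qed
      then have "\<forall>j. (i, j) \<notin> F" using F3 ic by blast
      moreover have "i \<notin> X" using XD ic \<open>(i, i) \<notin> F\<close> by blast
      ultimately show ?thesis using ic by (auto simp: PhiE_mem sig_eq_low2)
    qed
  qed
  show ?thesis unfolding is_typeB_tableau_def using c1 c2 c3 c4 by blast
qed

definition resE :: "nat \<Rightarrow> (nat \<times> nat) set \<Rightarrow> (nat \<times> nat) set" where
  "resE c H = {(i, j). (sig c i, j) \<in> H \<and> j \<noteq> c}"
definition colE :: "nat \<Rightarrow> (nat \<times> nat) set \<Rightarrow> nat set" where
  "colE c H = {i. (i, c) \<in> H}"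

lemma resE_valid:
  assumes H: "is_typeB_tableau (False # u) H"
  defines "c \<equiv> ncols u"
  shows "is_typeB_tableau u (resE c H) \<and> extD c (diagset c (resE c H)) (colE c H) \<and> H = PhiE c (resE c H) (colE c H)"
proof -
  let ?F = "resE c H" and ?X = "colE c H"
  have Hc: "H \<subseteq> shifted_cells (False # u)" and H1: "\<forall>j < Suc c. \<exists>i. (i, j) \<in> H"
    and H2: "\<forall>i j. (i, j) \<in> shifted_cells (False # u) - H \<longrightarrow> \<not> ((\<exists>i' < i. (i', j) \<in> H) \<and> (\<exists>j' < j. (i, j') \<in> H))"
    and H3: "\<forall>i < Suc c. (i, i) \<notin> H \<longrightarrow> (\<forall>j. (i, j) \<notin> H)"
    using H unfolding is_typeB_tableau_def c_def by auto
  have Fm: "(i, j) \<in> ?F \<longleftrightarrow> (sig c i, j) \<in> H \<and> j \<noteq> c" for i j by (simp add: resE_def)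
  have Xm: "i \<in> ?X \<longleftrightarrow> (i, c) \<in> H" for i by (simp add: colE_def)
  have Hold: "(a, b) \<in> H \<Longrightarrow> b \<noteq> c \<Longrightarrow> \<exists>i. a = sig c i \<and> (i, b) \<in> shifted_cells u" for a b
    using Hc cellsW[of a b u] unfolding c_def by auto
  have eqH: "H = PhiE c ?F ?X"
  proof (intro set_eqI)
    fix p :: "nat \<times> nat"
    obtain a b where p: "p = (a, b)" by (cases p)
    show "p \<in> H \<longleftrightarrow> p \<in> PhiE c ?F ?X"
      unfolding p PhiE_mem Fm Xm using Hold[of a b] by auto
  qed
  have F0: "?F \<subseteq> shifted_cells u"
  proof
    fix p assume "p \<in> ?F"
    then obtain i j where p: "p = (i, j)" "(sig c i, j) \<in> H" "j \<noteq> c" by (auto simp: resE_def)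
    then obtain i0 where "sig c i = sig c i0" "(i0, j) \<in> shifted_cells u" using Hold by blast
    then show "p \<in> shifted_cells u" using p by simp
  qed
  have F1: "\<forall>j < c. \<exists>i. (i, j) \<in> ?F"
  proof (intro allI impI)
    fix j assume j: "j < c"
    then obtain a where a: "(a, j) \<in> H" using H1 less_SucI by blast
    then obtain i where "a = sig c i" using Hold j by blast
    then show "\<exists>i. (i, j) \<in> ?F" using a j by (auto simp: Fm)
  qed
  have F2: "\<forall>i j. (i, j) \<in> shifted_cells u - ?F \<longrightarrow> \<not> ((\<exists>i' < i. (i', j) \<in> ?F) \<and> (\<exists>j' < j. (i, j') \<in> ?F))"
  proof (intro allI impI notI)
    fix i j assume ij: "(i, j) \<in> shifted_cells u - ?F" and ex: "(\<exists>i' < i. (i', j) \<in> ?F) \<and> (\<exists>j' < j. (i, j') \<in> ?F)"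
    have jc: "j < c" using ij cells_col unfolding c_def by blast
    have inc: "(sig c i, j) \<in> shifted_cells (False # u)" using ij unfolding cellsW c_def by blast
    have nH: "(sig c i, j) \<notin> H" using ij jc by (auto simp: Fm)
    from ex obtain i' j' where "i' < i" "(sig c i', j) \<in> H" "j' < j" "(sig c i, j') \<in> H" by (auto simp: Fm)
    then show False using H2 inc nH by (meson DiffI sig_less_iff)
  qed
  have F3: "\<forall>i < c. (i, i) \<notin> ?F \<longrightarrow> (\<forall>j. (i, j) \<notin> ?F)"
  proof (intro allI impI)
    fix i j assume i: "i < c" and nd: "(i, i) \<notin> ?F"
    then have "(i, i) \<notin> H" by (auto simp: Fm)
    then have "\<forall>j. (i, j) \<notin> H" using H3 i by auto
    then show "(i, j) \<notin> ?F" using i by (auto simp: Fm)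
  qed
  have tabF: "is_typeB_tableau u ?F" unfolding is_typeB_tableau_def c_def[symmetric] using F0 F1 F2 F3 by blast
  have X1: "?X \<subseteq> {..c}"
  proof
    fix i assume "i \<in> ?X"
    then have "(i, c) \<in> shifted_cells (False # u)" using Hc by (auto simp: Xm)
    then have "(c = c \<and> i \<le> c) \<or> (\<exists>i0. i = sig c i0 \<and> (i0, c) \<in> shifted_cells u)" unfolding cellsW c_def .
    then show "i \<in> {..c}" using cells_col[of _ c u] unfolding c_def by auto
  qed
  have X2: "?X \<noteq> {}"
  proof -
    obtain i where "(i, c) \<in> H" using H1 by blast
    then show ?thesis by (auto simp: Xm)
  qed
  have X3: "\<forall>i\<in>?X. i < c \<longrightarrow> i \<in> diagset c ?F"
  proof (intro ballI impI)
    fix i assume i: "i \<in> ?X" "i < c"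
    then have "(i, i) \<in> H" using H3 less_SucI unfolding Xm by blast
    then show "i \<in> diagset c ?F" using i by (auto simp: diagset_def Fm)
  qed
  have X4: "\<forall>i\<in>diagset c ?F. i \<notin> ?X \<longrightarrow> (\<forall>i'\<in>?X. \<not> i' < i)"
  proof (intro ballI impI notI)
    fix i i' assume i: "i \<in> diagset c ?F" "i \<notin> ?X" and i': "i' \<in> ?X" "i' < i"
    have ic: "i < c" and d: "(i, i) \<in> H" using i by (auto simp: diagset_def Fm)
    have "(i, c) \<in> shifted_cells (False # u)" using ic unfolding cellsW c_def by simp
    moreover have "(i, c) \<notin> H" using i by (simp add: Xm)
    ultimately show False using H2 i' d ic by (meson DiffI Xm)
  qed
  have "extD c (diagset c ?F) ?X" unfolding extD_def using X1 X2 X3 X4 by blast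
  then show ?thesis using tabF eqH by blast
qed

lemma PhiE_inv:
  assumes "F \<subseteq> shifted_cells u"
  defines "c \<equiv> ncols u"
  shows "resE c (PhiE c F X) = F" "colE c (PhiE c F X) = X"
proof -
  have Fc: "(i, j) \<in> F \<Longrightarrow> j < c" for i j using assms cells_col unfolding c_def by blast
  show "resE c (PhiE c F X) = F"
    unfolding resE_def using Fc by (auto simp: PhiE_mem)
  show "colE c (PhiE c F X) = X"
    unfolding colE_def using Fc by (auto simp: PhiE_mem)
qed

lemma dm_PhiE:
  assumes "is_typeB_tableau u F"
  defines "c \<equiv> ncols u"
  shows "dm (False # u) (PhiE c F X) = card (diagset c F) + (if c \<in> X then 1 else 0)"
proof -
  have "{i. i < ncols (False # u) \<and> (i, i) \<in> PhiE c F X} = diagset c F \<union> (if c \<in> X then {c} else {})"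
    unfolding c_def diagset_def by (auto simp: PhiE_mem sig_eq_low2)
  moreover have "c \<notin> diagset c F" by (simp add: diagset_def)
  moreover have "finite (diagset c F)" by (simp add: diagset_def)
  ultimately show ?thesis by (simp add: dm_def)
qed

definition ups :: "nat set \<Rightarrow> nat set set" where
  "ups D = {Y. Y \<subseteq> D \<and> (\<forall>i\<in>D. \<forall>i'\<in>Y. i' < i \<longrightarrow> i \<in> Y)}"

lemma card_ups:
  assumes fin: "finite D"
  shows "card (ups D) = card D + 1"
proof -
  let ?f = "\<lambda>t. {i \<in> D. t \<le> i}"
  have eq: "ups D = insert {} (?f ` D)"
  proof
    show "ups D \<subseteq> insert {} (?f ` D)"
    proof
      fix Y assume Y: "Y \<in> ups D"
      show "Y \<in> insert {} (?f ` D)"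
      proof (cases "Y = {}")
        case False
        have fY: "finite Y" using Y fin unfolding ups_def by (auto intro: finite_subset)
        let ?t = "Min Y"
        have tY: "?t \<in> Y" using Min_in[OF fY False] .
        have "Y = ?f ?t"
        proof
          show "Y \<subseteq> ?f ?t" using Y fY unfolding ups_def by auto
          show "?f ?t \<subseteq> Y"
          proof
            fix i assume "i \<in> ?f ?t"
            then have i: "i \<in> D" "?t \<le> i" by auto
            show "i \<in> Y"
            proof (cases "i = ?t")
              case True then show ?thesis using tY by simp
            next
              case False then have "?t < i" using i by simp
              then show ?thesis using Y i tY unfolding ups_def by blast
            qed
          qed
        qed
        moreover have "?t \<in> D" using tY Y unfolding ups_def by auto
        ultimately show ?thesis by blast
      qed simp
    qed
    show "insert {} (?f ` D) \<subseteq> ups D" unfolding ups_def by auto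
  qed
  have inj: "inj_on ?f D"
  proof (rule inj_onI)
    fix x y assume "x \<in> D" "y \<in> D" "?f x = ?f y"
    then have "x \<in> ?f y" "y \<in> ?f x" by auto
    then show "x = y" by auto
  qed
  have "{} \<notin> ?f ` D" by auto
  then have "card (ups D) = Suc (card (?f ` D))" unfolding eq using fin by simp
  then show ?thesis using card_image[OF inj] by simp
qed

lemma ext_in:
  assumes D: "D \<subseteq> {..<c}"
  shows "{X. extD c D X \<and> c \<in> X} = insert c ` ups D"
proof
  show "{X. extD c D X \<and> c \<in> X} \<subseteq> insert c ` ups D"
  proof
    fix X assume X: "X \<in> {X. extD c D X \<and> c \<in> X}"
    have X1: "X \<subseteq> {..c}" and X3: "\<forall>i\<in>X. i < c \<longrightarrow> i \<in> D"
      and X4: "\<forall>i\<in>D. i \<notin> X \<longrightarrow> (\<forall>i'\<in>X. \<not> i' < i)" and cX: "c \<in> X"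
      using X unfolding extD_def by auto
    have s1: "X - {c} \<subseteq> D"
    proof
      fix i assume "i \<in> X - {c}"
      then have "i \<in> X" "i < c" using X1 by auto
      then show "i \<in> D" using X3 by blast
    qed
    have s2: "\<forall>i\<in>D. \<forall>i'\<in>X - {c}. i' < i \<longrightarrow> i \<in> X - {c}"
    proof (intro ballI impI)
      fix i i' assume "i \<in> D" "i' \<in> X - {c}" "i' < i"
      then have "i \<in> X" using X4 by blast
      moreover have "i \<noteq> c" using \<open>i \<in> D\<close> D by auto
      ultimately show "i \<in> X - {c}" by blast
    qed
    have "X - {c} \<in> ups D" unfolding ups_def using s1 s2 by blast
    moreover have "X = insert c (X - {c})" using cX by auto
    ultimately show "X \<in> insert c ` ups D" by blast
  qed
  show "insert c ` ups D \<subseteq> {X. extD c D X \<and> c \<in> X}"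
  proof
    fix X assume "X \<in> insert c ` ups D"
    then obtain Y where X: "X = insert c Y" and Y: "Y \<subseteq> D" "\<forall>i\<in>D. \<forall>i'\<in>Y. i' < i \<longrightarrow> i \<in> Y"
      unfolding ups_def by blast
    have "X \<subseteq> {..c}" using X Y D by auto
    moreover have "X \<noteq> {}" using X by simp
    moreover have "\<forall>i\<in>X. i < c \<longrightarrow> i \<in> D" using X Y by auto
    moreover have "\<forall>i\<in>D. i \<notin> X \<longrightarrow> (\<forall>i'\<in>X. \<not> i' < i)"
    proof (intro ballI impI notI)
      fix i i' assume "i \<in> D" "i \<notin> X" "i' \<in> X" "i' < i"
      show False
      proof (cases "i' = c")
        case True then show False using \<open>i \<in> D\<close> D \<open>i' < i\<close> by auto
      next
        case False then have "i' \<in> Y" using X \<open>i' \<in> X\<close> by blast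
        then show False using Y \<open>i \<in> D\<close> \<open>i \<notin> X\<close> \<open>i' < i\<close> X by blast
      qed
    qed
    ultimately show "X \<in> {X. extD c D X \<and> c \<in> X}" unfolding extD_def using X by blast
  qed
qed

lemma ext_out:
  assumes D: "D \<subseteq> {..<c}"
  shows "{X. extD c D X \<and> c \<notin> X} = ups D - {{}}"
proof
  show "{X. extD c D X \<and> c \<notin> X} \<subseteq> ups D - {{}}"
  proof
    fix X assume X: "X \<in> {X. extD c D X \<and> c \<notin> X}"
    have X1: "X \<subseteq> {..c}" and X2: "X \<noteq> {}" and X3: "\<forall>i\<in>X. i < c \<longrightarrow> i \<in> D"
      and X4: "\<forall>i\<in>D. i \<notin> X \<longrightarrow> (\<forall>i'\<in>X. \<not> i' < i)" and cX: "c \<notin> X"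
      using X unfolding extD_def by auto
    have s1: "X \<subseteq> D"
    proof
      fix i assume "i \<in> X"
      then have "i < c" using X1 cX by (metis atMost_iff le_neq_implies_less subsetD)
      then show "i \<in> D" using X3 \<open>i \<in> X\<close> by blast
    qed
    have s2: "\<forall>i\<in>D. \<forall>i'\<in>X. i' < i \<longrightarrow> i \<in> X" using X4 by blast
    show "X \<in> ups D - {{}}" unfolding ups_def using s1 s2 X2 by blast
  qed
  show "ups D - {{}} \<subseteq> {X. extD c D X \<and> c \<notin> X}"
  proof
    fix X assume "X \<in> ups D - {{}}"
    then have Y: "X \<subseteq> D" "\<forall>i\<in>D. \<forall>i'\<in>X. i' < i \<longrightarrow> i \<in> X" "X \<noteq> {}" unfolding ups_def by auto
    have "X \<subseteq> {..c}" using Y D by auto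
    moreover have "\<forall>i\<in>X. i < c \<longrightarrow> i \<in> D" using Y by auto
    moreover have "\<forall>i\<in>D. i \<notin> X \<longrightarrow> (\<forall>i'\<in>X. \<not> i' < i)" using Y by blast
    moreover have "c \<notin> X" using Y D by auto
    ultimately show "X \<in> {X. extD c D X \<and> c \<notin> X}" unfolding extD_def using Y by blast
  qed
qed

lemma card_ext:
  assumes "D \<subseteq> {..<c}"
  shows "card {X. extD c D X \<and> card D + (if c \<in> X then 1 else 0) = m}
     = (if card D + 1 = m then card D + 1 else 0) + (if card D = m then card D else 0)"
proof -
  have fin: "finite D" using assms finite_subset by blast
  have cD: "c \<notin> Y" if "Y \<in> ups D" for Y using that assms unfolding ups_def by auto
  have inj: "inj_on (insert c) (ups D)"
    by (rule inj_onI) (metis cD insert_ident)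
  have c1: "card {X. extD c D X \<and> c \<in> X} = card D + 1"
    unfolding ext_in[OF assms] card_image[OF inj] card_ups[OF fin] ..
  have "{} \<in> ups D" by (simp add: ups_def)
  then have c2: "card {X. extD c D X \<and> c \<notin> X} = card D"
    unfolding ext_out[OF assms] using card_ups[OF fin] fin by (simp add: ups_def)
  have split: "{X. extD c D X \<and> card D + (if c \<in> X then 1 else 0) = m}
     = (if card D + 1 = m then {X. extD c D X \<and> c \<in> X} else {}) \<union> (if card D = m then {X. extD c D X \<and> c \<notin> X} else {})"
    by auto
  have finX: "finite {X. extD c D X \<and> P X}" for P
    by (rule finite_subset[of _ "Pow {..c}"]) (auto simp: extD_def)
  show ?thesis unfolding split
    by (subst card_Un_disjoint) (auto simp: c1 c2 finX)
qed

lemma dm_diagset: "dm u F = card (diagset (ncols u) F)"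
  by (simp add: dm_def diagset_def)

lemma sum_if_const: "finite A \<Longrightarrow> (\<Sum>F\<in>A. if P F then (m::nat) else 0) = m * card {F \<in> A. P F}"
  by (simp add: sum.inter_filter[symmetric])

lemma NN_cons_W: "NN (False # u) m = m * NN u (m - 1) + m * NN u m"
proof -
  let ?c = "ncols u"
  let ?A = "{F. is_typeB_tableau u F}"
  let ?B = "\<lambda>F. {X. extD ?c (diagset ?c F) X \<and> card (diagset ?c F) + (if ?c \<in> X then 1 else 0) = m}"
  let ?P = "\<lambda>(F, X). PhiE ?c F X"
  have eq: "{H. is_typeB_tableau (False # u) H \<and> dm (False # u) H = m} = ?P ` Sigma ?A ?B"
  proof
    show "{H. is_typeB_tableau (False # u) H \<and> dm (False # u) H = m} \<subseteq> ?P ` Sigma ?A ?B"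
    proof
      fix H assume H: "H \<in> {H. is_typeB_tableau (False # u) H \<and> dm (False # u) H = m}"
      let ?F = "resE ?c H" and ?X = "colE ?c H"
      have r: "is_typeB_tableau u ?F" "extD ?c (diagset ?c ?F) ?X" "H = PhiE ?c ?F ?X"
        using resE_valid[of u H] H by auto
      have "dm (False # u) H = card (diagset ?c ?F) + (if ?c \<in> ?X then 1 else 0)"
        using dm_PhiE[OF r(1), of ?X] r(3) by simp
      then have "(?F, ?X) \<in> Sigma ?A ?B" using r H by auto
      then show "H \<in> ?P ` Sigma ?A ?B" using r(3) by (metis (no_types, lifting) case_prod_conv image_eqI)
    qed
    show "?P ` Sigma ?A ?B \<subseteq> {H. is_typeB_tableau (False # u) H \<and> dm (False # u) H = m}"
    proof
      fix H assume "H \<in> ?P ` Sigma ?A ?B"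
      then obtain F X where FX: "H = PhiE ?c F X" "is_typeB_tableau u F"
        "extD ?c (diagset ?c F) X" "card (diagset ?c F) + (if ?c \<in> X then 1 else 0) = m" by auto
      then show "H \<in> {H. is_typeB_tableau (False # u) H \<and> dm (False # u) H = m}"
        using PhiE_valid[OF FX(2,3)] dm_PhiE[OF FX(2), of X] by simp
    qed
  qed
  have inj: "inj_on ?P (Sigma ?A ?B)"
  proof (rule inj_onI)
    fix p q assume p: "p \<in> Sigma ?A ?B" and q: "q \<in> Sigma ?A ?B" and e: "?P p = ?P q"
    obtain F X where pF: "p = (F, X)" by (cases p)
    obtain G Y where qG: "q = (G, Y)" by (cases q)
    have Fc: "F \<subseteq> shifted_cells u" "G \<subseteq> shifted_cells u"
      using p q pF qG unfolding is_typeB_tableau_def by auto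
    have "PhiE ?c F X = PhiE ?c G Y" using e pF qG by simp
    then have "F = G" "X = Y" using PhiE_inv[OF Fc(1), of X] PhiE_inv[OF Fc(2), of Y] by metis+
    then show "p = q" using pF qG by simp
  qed
  have finA: "finite ?A" by (rule finite_tab)
  have finB: "\<forall>F\<in>?A. finite (?B F)"
  proof
    fix F
    have "?B F \<subseteq> Pow {..?c}" unfolding extD_def by blast
    then show "finite (?B F)" by (rule finite_subset) simp
  qed
  have Dsub: "diagset ?c F \<subseteq> {..<?c}" for F by (auto simp: diagset_def)
  have "NN (False # u) m = card (Sigma ?A ?B)"
    unfolding NN_def eq by (rule card_image[OF inj])
  also have "\<dots> = (\<Sum>F\<in>?A. card (?B F))" using finA finB by (rule card_SigmaI)
  also have "\<dots> = (\<Sum>F\<in>?A. (if dm u F + 1 = m then m else 0) + (if dm u F = m then m else 0))"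
    using card_ext[OF Dsub] by (intro sum.cong refl) (simp add: dm_diagset)
  also have "\<dots> = m * card {F \<in> ?A. dm u F + 1 = m} + m * card {F \<in> ?A. dm u F = m}"
    by (simp add: sum.distrib sum_if_const finA)
  also have "\<dots> = m * NN u (m - 1) + m * NN u m"
  proof (cases m)
    case 0 then show ?thesis by simp
  next
    case (Suc m')
    then have "{F \<in> ?A. dm u F + 1 = m} = {F. is_typeB_tableau u F \<and> dm u F = m - 1}" by auto
    moreover have "{F \<in> ?A. dm u F = m} = {F. is_typeB_tableau u F \<and> dm u F = m}" by auto
    ultimately show ?thesis by (simp add: NN_def)
  qed
  finally show ?thesis .
qed



definition rl_at :: "nat list \<Rightarrow> nat \<Rightarrow> nat" where
  "rl_at xs k = (if k < length xs then xs ! k else 0)"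

lemma LL_rl_at: "LL w i = (if ncols w \<le> i then rl_at (rowlens w) (i - ncols w) else 0)"
  unfolding LL_def rl_at_def by auto

lemma rl_at_app: "rl_at (map f xs @ ys) k = (if k < length xs then f (xs ! k) else rl_at ys (k - length xs))"
  unfolding rl_at_def by (auto simp: nth_append)

lemma rl_at_Cons: "rl_at (y # ys) k = (if k = 0 then y else rl_at ys (k - 1))"
  unfolding rl_at_def by (cases k) auto

lemma rl_at_le: "rl_at (rowlens w) k \<le> ncols w"
  unfolding rl_at_def using rowlens_le nth_mem by fastforce

locale SW =
  fixes u v :: "bool list"
begin

definition "K = ncols v"
definition "cu = ncols u"
definition "cc = cu + Suc K"
definition "r = length (rowlens u)"
definition "R = cc + r"
definition "Lu d = rowlens u ! d"
definition "Lv k = rl_at (rowlens v) k"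
definition "L1 d = (if d < r then Lu d + Suc K else if d = r then Suc K else Lv (d - Suc r))"
definition "L2 d = (if d < r then Lu d + Suc K else if d = r then K else Lv (d - Suc r))"
definition "L3 d = (if d < r then Lu d + K else if d = r then K else Lv (d - Suc r))"
definition "L4 d = (if d < r then Lu d + Suc K else Lv (d - r))"

abbreviation "w1 \<equiv> u @ True # False # v"
abbreviation "w2 \<equiv> u @ False # True # v"
abbreviation "w3 \<equiv> u @ True # v"
abbreviation "w4 \<equiv> u @ False # v"

lemma nc: "ncols w1 = cc" "ncols w2 = cc" "ncols w3 = cu + K" "ncols w4 = cc"
  by (simp_all add: cc_def cu_def K_def)

lemma Lv_le: "Lv k \<le> K" unfolding Lv_def K_def by (rule rl_at_le)
lemma Lv_nlt[simp]: "\<not> K < Lv k" using Lv_le[of k] by simp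
lemma K_lt: "K < cc" by (simp add: cc_def)
lemma cc_le_R: "cc \<le> R" by (simp add: R_def)
lemma cc3: "cu + K = cc - 1" "Suc (cu + K) = cc" by (simp_all add: cc_def)

lemma ra1: "rl_at (rowlens w1) d = L1 d"
  by (simp add: rowlens_append ncols_def rl_at_app rl_at_Cons L1_def Lu_def Lv_def r_def K_def)
lemma ra2: "rl_at (rowlens w2) d = L2 d"
  by (simp add: rowlens_append ncols_def rl_at_app rl_at_Cons L2_def Lu_def Lv_def r_def K_def)
lemma ra3: "rl_at (rowlens w3) d = L3 d"
  by (simp add: rowlens_append ncols_def rl_at_app rl_at_Cons L3_def Lu_def Lv_def r_def K_def)
lemma ra4: "rl_at (rowlens w4) d = L4 d"
  by (simp add: rowlens_append ncols_def rl_at_app L4_def Lu_def Lv_def r_def K_def)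

lemma cellsX:
  assumes "ncols w = n" "\<And>d. rl_at (rowlens w) d = L d"
  shows "(a, b) \<in> shifted_cells w \<longleftrightarrow> (a < n \<and> a \<le> b \<and> b < n) \<or> (\<exists>d. a = n + d \<and> b < L d)"
  unfolding cells_iff LL_rl_at assms by (auto intro!: exI[of _ "a - n"])

lemmas cells1 = cellsX[OF nc(1) ra1]
lemmas cells2 = cellsX[OF nc(2) ra2]
lemmas cells3 = cellsX[OF nc(3) ra3]
lemmas cells4 = cellsX[OF nc(4) ra4]

lemma F1: "shifted_cells w1 = insert (R, K) (shifted_cells w2)"
proof (intro set_eqI)
  fix p :: "nat \<times> nat" obtain a b where p: "p = (a, b)" by (cases p)
  have "(\<exists>d. a = cc + d \<and> b < L1 d) \<longleftrightarrow> (a, b) = (R, K) \<or> (\<exists>d. a = cc + d \<and> b < L2 d)"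
    by (auto simp: L1_def L2_def R_def)
  then show "p \<in> shifted_cells w1 \<longleftrightarrow> p \<in> insert (R, K) (shifted_cells w2)"
    unfolding p using cells1[of a b] cells2[of a b] by auto
qed

lemma kappa_notin2: "(R, K) \<notin> shifted_cells w2"
  unfolding cells2 using cc_le_R K_lt by (auto simp: L2_def R_def)

lemma kappa_in1: "(R, K) \<in> shifted_cells w1"
  unfolding F1 by simp

lemma colK: "(a, K) \<in> shifted_cells w1 \<Longrightarrow> a \<le> R"
  unfolding cells1 using cc_le_R by (auto simp: L1_def R_def split: if_splits)

lemma rowR: "(R, b) \<in> shifted_cells w1 \<Longrightarrow> b \<le> K"
  unfolding cells1 using cc_le_R by (auto simp: L1_def R_def)

lemma L41a: "d < r \<Longrightarrow> L4 d = L1 d" by (simp add: L1_def L4_def)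
lemma L41b: "r \<le> d \<Longrightarrow> L4 d = L1 (Suc d)" by (simp add: L1_def L4_def)

lemma F2a: "(a, b) \<in> shifted_cells w1 \<Longrightarrow> a \<noteq> R \<Longrightarrow> \<exists>i. a = sig R i \<and> (i, b) \<in> shifted_cells w4"
proof -
  assume h: "(a, b) \<in> shifted_cells w1" "a \<noteq> R"
  from h(1) consider (st) "a < cc" "a \<le> b" "b < cc" | (fe) d where "a = cc + d" "b < L1 d"
    unfolding cells1 by blast
  then show ?thesis
  proof cases
    case st
    then have "sig R a = a" using cc_le_R by simp
    moreover have "(a, b) \<in> shifted_cells w4" using st unfolding cells4 by blast
    ultimately show ?thesis by metis
  next
    case fe
    have "d \<noteq> r" using fe h(2) by (simp add: R_def)
    then consider "d < r" | "r < d" by linarith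
    then show ?thesis
    proof cases
      case 1
      then have "sig R a = a" using fe by (simp add: R_def)
      moreover have "(a, b) \<in> shifted_cells w4" using fe 1 L41a[OF 1] unfolding cells4 by auto
      ultimately show ?thesis by metis
    next
      case 2
      then have "sig R (cc + (d - 1)) = a" using fe by (simp add: R_def sig_def)
      moreover have "L4 (d - 1) = L1 d" using L41b[of "d - 1"] 2 by simp
      then have "(cc + (d - 1), b) \<in> shifted_cells w4" using fe unfolding cells4 by auto
      ultimately show ?thesis by metis
    qed
  qed
qed

lemma F2b: "(i, b) \<in> shifted_cells w4 \<Longrightarrow> (sig R i, b) \<in> shifted_cells w1 \<and> sig R i \<noteq> R"
proof -
  assume h: "(i, b) \<in> shifted_cells w4"
  from h consider (st) "i < cc" "i \<le> b" "b < cc" | (fe) d where "i = cc + d" "b < L4 d"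
    unfolding cells4 by blast
  then show ?thesis
  proof cases
    case st
    then have "sig R i = i" using cc_le_R by simp
    then show ?thesis using st cc_le_R unfolding cells1 by auto
  next
    case fe
    consider "d < r" | "r \<le> d" by linarith
    then show ?thesis
    proof cases
      case 1
      then have "sig R i = i" using fe by (simp add: R_def)
      then show ?thesis using fe 1 L41a[OF 1] unfolding cells1 by (auto simp: R_def)
    next
      case 2
      then have "sig R i = cc + Suc d" using fe by (simp add: R_def sig_def)
      then show ?thesis using fe 2 L41b[OF 2] unfolding cells1 by (auto simp: R_def)
    qed
  qed
qed

lemma sigK_lt_cc: "sig K x < cc \<longleftrightarrow> x < cu + K"
  by (auto simp: sig_def cc_def)

lemma sigK_L: "sig K j < L1 d \<longleftrightarrow> j < L3 d"
proof -
  consider "d < r" | "d = r" | "r < d" by linarith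
  then show ?thesis
  proof cases
    case 1 then show ?thesis by (auto simp: L1_def L3_def sig_def)
  next
    case 2 then show ?thesis by (auto simp: L1_def L3_def sig_def)
  next
    case 3
    have "Lv (d - Suc r) \<le> K" by (rule Lv_le)
    then show ?thesis using 3 by (auto simp: L1_def L3_def sig_def)
  qed
qed

lemma F3: "(sig K i, sig K j) \<in> shifted_cells w1 \<longleftrightarrow> (i, j) \<in> shifted_cells w3"
proof -
  have A: "(sig K i < cc \<and> sig K i \<le> sig K j \<and> sig K j < cc) \<longleftrightarrow> (i < cu + K \<and> i \<le> j \<and> j < cu + K)"
    by (simp add: sigK_lt_cc le_less)
  have B: "(\<exists>d. sig K i = cc + d \<and> sig K j < L1 d) \<longleftrightarrow> (\<exists>d. i = cu + K + d \<and> j < L3 d)"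
  proof
    assume "\<exists>d. sig K i = cc + d \<and> sig K j < L1 d"
    then obtain d where d: "sig K i = cc + d" "sig K j < L1 d" by blast
    have "i = cu + K + d" using d(1) K_lt by (auto simp: sig_def cc_def split: if_splits)
    then show "\<exists>d. i = cu + K + d \<and> j < L3 d" using d(2) sigK_L by blast
  next
    assume "\<exists>d. i = cu + K + d \<and> j < L3 d"
    then obtain d where d: "i = cu + K + d" "j < L3 d" by blast
    have "sig K i = cc + d" using d(1) by (auto simp: sig_def cc_def)
    then show "\<exists>d. sig K i = cc + d \<and> sig K j < L1 d" using d(2) sigK_L by blast
  qed
  show ?thesis unfolding cells1 cells3 A B ..
qed

lemma sig_surj: "a \<noteq> c \<Longrightarrow> \<exists>i. a = sig c i"
  by (rule exI[of _ "if a < c then a else a - 1"]) (auto simp: sig_def)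

lemma R_ne_K: "R \<noteq> K" using K_lt cc_le_R by simp

end


lemma tabE:
  assumes "is_typeB_tableau w F"
  shows "F \<subseteq> shifted_cells w" "\<And>j. j < ncols w \<Longrightarrow> \<exists>i. (i, j) \<in> F"
    "\<And>i j i' j'. (i, j) \<in> shifted_cells w \<Longrightarrow> (i, j) \<notin> F \<Longrightarrow> i' < i \<Longrightarrow> (i', j) \<in> F \<Longrightarrow> j' < j \<Longrightarrow> (i, j') \<in> F \<Longrightarrow> False"
    "\<And>i j. i < ncols w \<Longrightarrow> (i, i) \<notin> F \<Longrightarrow> (i, j) \<notin> F"
  using assms unfolding is_typeB_tableau_def by blast+

lemma tabI:
  assumes "F \<subseteq> shifted_cells w" "\<And>j. j < ncols w \<Longrightarrow> \<exists>i. (i, j) \<in> F"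
    "\<And>i j i' j'. (i, j) \<in> shifted_cells w \<Longrightarrow> (i, j) \<notin> F \<Longrightarrow> i' < i \<Longrightarrow> (i', j) \<in> F \<Longrightarrow> j' < j \<Longrightarrow> (i, j') \<in> F \<Longrightarrow> False"
    "\<And>i j. i < ncols w \<Longrightarrow> (i, i) \<notin> F \<Longrightarrow> (i, j) \<notin> F"
  shows "is_typeB_tableau w F"
  using assms unfolding is_typeB_tableau_def by blast

context SW begin

abbreviation "kap \<equiv> (R, K)"

lemma P3_fwd:
  assumes H: "is_typeB_tableau w1 H" and k: "kap \<in> H" and oth: "(i0, K) \<in> H" "i0 \<noteq> R"
  shows "is_typeB_tableau w2 (H - {kap})"
proof (rule tabI)
  note HE = tabE[OF H]
  show "H - {kap} \<subseteq> shifted_cells w2" using HE(1) F1 by auto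
  show "\<exists>i. (i, j) \<in> H - {kap}" if "j < ncols w2" for j
  proof -
    have j: "j < ncols w1" using that nc by simp
    show ?thesis
    proof (cases "j = K")
      case True then show ?thesis using oth by auto
    next
      case False then show ?thesis using HE(2)[OF j] by auto
    qed
  qed
  show False if "(i, j) \<in> shifted_cells w2" "(i, j) \<notin> H - {kap}" "i' < i" "(i', j) \<in> H - {kap}" "j' < j" "(i, j') \<in> H - {kap}" for i j i' j'
  proof -
    have "(i, j) \<noteq> kap" using that(1) kappa_notin2 by blast
    then have "(i, j) \<notin> H" using that(2) by simp
    moreover have "(i, j) \<in> shifted_cells w1" using that(1) F1 by simp
    ultimately show False using HE(3) that by blast
  qed
  show "(i, j) \<notin> H - {kap}" if "i < ncols w2" "(i, i) \<notin> H - {kap}" for i j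
  proof -
    have "i < cc" using that nc by simp
    then have "(i, i) \<noteq> kap" using cc_le_R by auto
    then have "(i, i) \<notin> H" using that by simp
    have "i < ncols w1" using \<open>i < cc\<close> nc(1) by simp
    then have "(i, j) \<notin> H" using HE(4) \<open>(i, i) \<notin> H\<close> by blast
    then show ?thesis by simp
  qed
qed

lemma P3_bwd:
  assumes Y: "is_typeB_tableau w2 Y"
  shows "is_typeB_tableau w1 (insert kap Y) \<and> (\<exists>i. i \<noteq> R \<and> (i, K) \<in> insert kap Y)"
proof
  note YE = tabE[OF Y]
  let ?H = "insert kap Y"
  show "is_typeB_tableau w1 ?H"
  proof (rule tabI)
    show "?H \<subseteq> shifted_cells w1" using YE(1) F1 by auto
    show "\<exists>i. (i, j) \<in> ?H" if "j < ncols w1" for j using YE(2)[of j] that nc by auto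
    show False if "(i, j) \<in> shifted_cells w1" "(i, j) \<notin> ?H" "i' < i" "(i', j) \<in> ?H" "j' < j" "(i, j') \<in> ?H" for i j i' j'
    proof -
      have a: "(i', j) \<in> Y"
      proof (rule ccontr)
        assume "(i', j) \<notin> Y"
        then have "(i', j) = kap" using that(4) by simp
        then have "i' = R" "j = K" by auto
        then show False using colK[of i] that(1) that(3) by simp
      qed
      have b: "(i, j') \<in> Y"
      proof (rule ccontr)
        assume "(i, j') \<notin> Y"
        then have "(i, j') = kap" using that(6) by simp
        then have "i = R" "j' = K" by auto
        then show False using rowR[of j] that(1) that(5) by simp
      qed
      have "(i, j) \<in> shifted_cells w2" using that(1,2) F1 by auto
      then show False using YE(3) a b that by blast
    qed
    show "(i, j) \<notin> ?H" if "i < ncols w1" "(i, i) \<notin> ?H" for i j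
    proof -
      have "i < cc" using that nc by simp
      then have "i \<noteq> R" using cc_le_R by auto
      then show ?thesis using YE(4)[of i j] that nc by auto
    qed
  qed
  obtain i where i: "(i, K) \<in> Y" using YE(2)[of K] K_lt nc by auto
  then have "i \<noteq> R" using YE(1) kappa_notin2 by auto
  then show "\<exists>i. i \<noteq> R \<and> (i, K) \<in> ?H" using i by auto
qed

lemma dm12: "dm w1 H = dm w2 (H - {kap})"
proof -
  have "{i. i < ncols w1 \<and> (i, i) \<in> H} = {i. i < ncols w2 \<and> (i, i) \<in> H - {kap}}"
    using R_ne_K by (auto simp: nc)
  then show ?thesis by (simp add: dm_def)
qed

lemma rowR_empty:
  assumes H: "is_typeB_tableau w1 H" and k: "kap \<notin> H"
  shows "(R, b) \<notin> H"
proof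
  assume Rb: "(R, b) \<in> H"
  note HE = tabE[OF H]
  have "b \<le> K" using rowR HE(1) Rb by blast
  moreover have "b \<noteq> K" using k Rb by auto
  ultimately have bK: "b < K" by simp
  have "K < ncols w1" using K_lt nc by simp
  then obtain i where i: "(i, K) \<in> H" using HE(2) by blast
  have "i \<noteq> R" using i k by auto
  moreover have "i \<le> R" using colK HE(1) i by blast
  ultimately have "i < R" by simp
  show False by (rule HE(3)[OF kappa_in1 k \<open>i < R\<close> i bK Rb])
qed

definition f2 :: "(nat \<times> nat) set \<Rightarrow> (nat \<times> nat) set" where
  "f2 H = {(i, j). (sig R i, j) \<in> H}"
definition g2 :: "(nat \<times> nat) set \<Rightarrow> (nat \<times> nat) set" where
  "g2 Y = (\<lambda>(i, j). (sig R i, j)) ` Y"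

lemma g2_mem: "(a, b) \<in> g2 Y \<longleftrightarrow> (\<exists>i. a = sig R i \<and> (i, b) \<in> Y)"
  unfolding g2_def by auto
lemma f2_mem: "(i, j) \<in> f2 H \<longleftrightarrow> (sig R i, j) \<in> H"
  unfolding f2_def by auto

lemma P2_fwd:
  assumes H: "is_typeB_tableau w1 H" and k: "kap \<notin> H"
  shows "is_typeB_tableau w4 (f2 H)"
proof (rule tabI)
  note HE = tabE[OF H]
  have nR: "(R, b) \<notin> H" for b using rowR_empty[OF H k] .
  show "f2 H \<subseteq> shifted_cells w4"
  proof
    fix p assume "p \<in> f2 H"
    then obtain i j where p: "p = (i, j)" "(sig R i, j) \<in> H" by (auto simp: f2_def)
    then have "(sig R i, j) \<in> shifted_cells w1" using HE(1) by blast
    then obtain i' where "sig R i = sig R i'" "(i', j) \<in> shifted_cells w4" using F2a by fastforce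
    then show "p \<in> shifted_cells w4" using p by simp
  qed
  show "\<exists>i. (i, j) \<in> f2 H" if "j < ncols w4" for j
  proof -
    have "j < ncols w1" using that nc by simp
    then obtain a where a: "(a, j) \<in> H" using HE(2) by blast
    then have "a \<noteq> R" using nR by blast
    then obtain i where "a = sig R i" using sig_surj by blast
    then show ?thesis using a f2_mem by blast
  qed
  show False if "(i, j) \<in> shifted_cells w4" "(i, j) \<notin> f2 H" "i' < i" "(i', j) \<in> f2 H" "j' < j" "(i, j') \<in> f2 H" for i j i' j'
  proof -
    have c: "(sig R i, j) \<in> shifted_cells w1" using F2b that(1) by blast
    have n: "(sig R i, j) \<notin> H" using that(2) f2_mem by blast
    have a: "(sig R i', j) \<in> H" using that(4) f2_mem by blast
    have b: "(sig R i, j') \<in> H" using that(6) f2_mem by blast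
    have "sig R i' < sig R i" using that(3) by simp
    then show False using HE(3)[OF c n _ a that(5) b] by blast
  qed
  show "(i, j) \<notin> f2 H" if "i < ncols w4" "(i, i) \<notin> f2 H" for i j
  proof -
    have i: "i < cc" using that nc by simp
    then have s: "sig R i = i" using cc_le_R by simp
    have "(i, i) \<notin> H" using that(2) s f2_mem by metis
    moreover have "i < ncols w1" using i nc by simp
    ultimately have "(i, j) \<notin> H" using HE(4) by blast
    then show ?thesis using s f2_mem by metis
  qed
qed

lemma P2_bwd:
  assumes Y: "is_typeB_tableau w4 Y"
  shows "is_typeB_tableau w1 (g2 Y) \<and> kap \<notin> g2 Y"
proof
  note YE = tabE[OF Y]
  show "kap \<notin> g2 Y" by (auto simp: g2_mem)
  show "is_typeB_tableau w1 (g2 Y)"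
  proof (rule tabI)
    show "g2 Y \<subseteq> shifted_cells w1"
    proof
      fix p assume "p \<in> g2 Y"
      then obtain i j where p: "p = (sig R i, j)" "(i, j) \<in> Y" by (auto simp: g2_def)
      then show "p \<in> shifted_cells w1" using F2b YE(1) by blast
    qed
    show "\<exists>i. (i, j) \<in> g2 Y" if "j < ncols w1" for j
    proof -
      have "j < ncols w4" using that nc by simp
      then obtain i where "(i, j) \<in> Y" using YE(2) by blast
      then show ?thesis using g2_mem by blast
    qed
    show False if "(a, b) \<in> shifted_cells w1" "(a, b) \<notin> g2 Y" "i' < a" "(i', b) \<in> g2 Y" "j' < b" "(a, j') \<in> g2 Y" for a b i' j'
    proof -
      note hh = that
      obtain y where y: "a = sig R y" "(y, j') \<in> Y" using hh(6) g2_mem by blast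
      then have "a \<noteq> R" by simp
      then obtain i where i: "a = sig R i" "(i, b) \<in> shifted_cells w4" using F2a hh(1) by blast
      have "y = i" using i y by simp
      obtain x where x: "i' = sig R x" "(x, b) \<in> Y" using hh(4) g2_mem by blast
      have "x < i" using x i hh(3) by simp
      have "(i, b) \<notin> Y" using hh(2) i g2_mem by blast
      then show False using YE(3)[OF i(2) _ \<open>x < i\<close> x(2) hh(5)] y \<open>y = i\<close> by blast
    qed
    show "(i, j) \<notin> g2 Y" if "i < ncols w1" "(i, i) \<notin> g2 Y" for i j
    proof -
      have ic: "i < cc" using that nc by simp
      then have s: "sig R i = i" using cc_le_R by simp
      have "(i, i) \<notin> Y" using that(2) s g2_mem by metis
      moreover have "i < ncols w4" using ic nc by simp
      ultimately have n: "(i, j) \<notin> Y" using YE(4) by blast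
      show ?thesis
      proof
        assume "(i, j) \<in> g2 Y"
        then obtain x where x: "i = sig R x" "(x, j) \<in> Y" using g2_mem by blast
        then have "x = i" using s by (metis sig_eq_iff)
        then show False using x n by simp
      qed
    qed
  qed
qed

lemma f2g2: "f2 (g2 Y) = Y"
  by (auto simp: f2_def g2_def)

lemma g2f2: "is_typeB_tableau w1 H \<Longrightarrow> kap \<notin> H \<Longrightarrow> g2 (f2 H) = H"
proof -
  assume H: "is_typeB_tableau w1 H" "kap \<notin> H"
  show "g2 (f2 H) = H"
  proof (intro set_eqI iffI)
    fix p assume "p \<in> g2 (f2 H)"
    then show "p \<in> H" by (auto simp: g2_def f2_def)
  next
    fix p assume p: "p \<in> H"
    obtain a b where ab: "p = (a, b)" by (cases p)
    have "a \<noteq> R" using rowR_empty[OF H] p ab by blast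
    then obtain i where "a = sig R i" using sig_surj by blast
    then show "p \<in> g2 (f2 H)" using p ab by (auto simp: g2_mem f2_mem)
  qed
qed

lemma dm14: "dm w1 (g2 Y) = dm w4 Y"
proof -
  have "{i. i < ncols w1 \<and> (i, i) \<in> g2 Y} = {i. i < ncols w4 \<and> (i, i) \<in> Y}"
  proof (intro set_eqI iffI)
    fix i assume "i \<in> {i. i < ncols w1 \<and> (i, i) \<in> g2 Y}"
    then have i: "i < cc" "(i, i) \<in> g2 Y" using nc by auto
    then obtain x where "i = sig R x" "(x, i) \<in> Y" using g2_mem by blast
    moreover have "sig R i = i" using i cc_le_R by simp
    ultimately have "(i, i) \<in> Y" by (metis sig_eq_iff)
    then show "i \<in> {i. i < ncols w4 \<and> (i, i) \<in> Y}" using i nc by simp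
  next
    fix i assume "i \<in> {i. i < ncols w4 \<and> (i, i) \<in> Y}"
    then have i: "i < cc" "(i, i) \<in> Y" using nc by auto
    moreover have "sig R i = i" using i cc_le_R by simp
    ultimately have "(i, i) \<in> g2 Y" using g2_mem by metis
    then show "i \<in> {i. i < ncols w1 \<and> (i, i) \<in> g2 Y}" using i nc by simp
  qed
  then show ?thesis by (simp add: dm_def)
qed

definition f1 :: "(nat \<times> nat) set \<Rightarrow> (nat \<times> nat) set" where
  "f1 H = {(i, j). (sig K i, sig K j) \<in> H}"
definition g1 :: "(nat \<times> nat) set \<Rightarrow> (nat \<times> nat) set" where
  "g1 Y = insert kap ((\<lambda>(i, j). (sig K i, sig K j)) ` Y)"

lemma g1_mem: "(a, b) \<in> g1 Y \<longleftrightarrow> (a, b) = kap \<or> (\<exists>i j. a = sig K i \<and> b = sig K j \<and> (i, j) \<in> Y)"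
  unfolding g1_def by auto
lemma f1_mem: "(i, j) \<in> f1 H \<longleftrightarrow> (sig K i, sig K j) \<in> H"
  unfolding f1_def by auto

lemma rowK_empty:
  assumes H: "is_typeB_tableau w1 H" and P: "\<forall>i. i \<noteq> R \<longrightarrow> (i, K) \<notin> H"
  shows "(K, j) \<notin> H"
proof -
  note HE = tabE[OF H]
  have "(K, K) \<notin> H" using P R_ne_K by metis
  moreover have "K < ncols w1" using K_lt nc by simp
  ultimately show ?thesis using HE(4) by blast
qed

lemma P1_fwd:
  assumes H: "is_typeB_tableau w1 H" and P: "\<forall>i. i \<noteq> R \<longrightarrow> (i, K) \<notin> H"
  shows "is_typeB_tableau w3 (f1 H)"
proof (rule tabI)
  note HE = tabE[OF H]
  have nK: "(K, j) \<notin> H" for j using rowK_empty[OF H P] .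
  show "f1 H \<subseteq> shifted_cells w3"
  proof
    fix p assume "p \<in> f1 H"
    then obtain i j where p: "p = (i, j)" "(sig K i, sig K j) \<in> H" by (auto simp: f1_def)
    then show "p \<in> shifted_cells w3" using HE(1) F3 by blast
  qed
  show "\<exists>i. (i, j) \<in> f1 H" if "j < ncols w3" for j
  proof -
    have "sig K j < ncols w1" using that nc sigK_lt_cc by simp
    then obtain a where a: "(a, sig K j) \<in> H" using HE(2) by blast
    then have "a \<noteq> K" using nK by blast
    then obtain i where "a = sig K i" using sig_surj by blast
    then show ?thesis using a f1_mem by blast
  qed
  show False if "(i, j) \<in> shifted_cells w3" "(i, j) \<notin> f1 H" "i' < i" "(i', j) \<in> f1 H" "j' < j" "(i, j') \<in> f1 H" for i j i' j'
  proof -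
    have c: "(sig K i, sig K j) \<in> shifted_cells w1" using F3 that(1) by blast
    have n: "(sig K i, sig K j) \<notin> H" using that(2) f1_mem by blast
    have a: "(sig K i', sig K j) \<in> H" using that(4) f1_mem by blast
    have b: "(sig K i, sig K j') \<in> H" using that(6) f1_mem by blast
    have "sig K i' < sig K i" "sig K j' < sig K j" using that(3,5) by simp_all
    then show False using HE(3)[OF c n _ a _ b] by blast
  qed
  show "(i, j) \<notin> f1 H" if "i < ncols w3" "(i, i) \<notin> f1 H" for i j
  proof -
    have "sig K i < ncols w1" using that nc sigK_lt_cc by simp
    moreover have "(sig K i, sig K i) \<notin> H" using that(2) f1_mem by blast
    ultimately have "(sig K i, sig K j) \<notin> H" using HE(4) by blast
    then show ?thesis using f1_mem by blast
  qed
qed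

lemma P1_bwd:
  assumes Y: "is_typeB_tableau w3 Y"
  shows "is_typeB_tableau w1 (g1 Y) \<and> kap \<in> g1 Y \<and> (\<forall>i. i \<noteq> R \<longrightarrow> (i, K) \<notin> g1 Y)"
proof (intro conjI)
  note YE = tabE[OF Y]
  show "kap \<in> g1 Y" by (simp add: g1_def)
  show P: "\<forall>i. i \<noteq> R \<longrightarrow> (i, K) \<notin> g1 Y" by (auto simp: g1_mem)
  show "is_typeB_tableau w1 (g1 Y)"
  proof (rule tabI)
    show "g1 Y \<subseteq> shifted_cells w1"
    proof
      fix p assume "p \<in> g1 Y"
      then consider "p = kap" | i j where "p = (sig K i, sig K j)" "(i, j) \<in> Y" by (auto simp: g1_def)
      then show "p \<in> shifted_cells w1"
      proof cases
        case 1 then show ?thesis using kappa_in1 by simp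
      next
        case 2 then show ?thesis using F3 YE(1) by blast
      qed
    qed
    show "\<exists>i. (i, j) \<in> g1 Y" if "j < ncols w1" for j
    proof (cases "j = K")
      case True then show ?thesis by (auto simp: g1_mem)
    next
      case False
      then obtain j0 where j0: "j = sig K j0" using sig_surj by blast
      then have "j0 < ncols w3" using that nc sigK_lt_cc by simp
      then obtain i where "(i, j0) \<in> Y" using YE(2) by blast
      then show ?thesis using j0 g1_mem by blast
    qed
    show False if "(a, b) \<in> shifted_cells w1" "(a, b) \<notin> g1 Y" "i' < a" "(i', b) \<in> g1 Y" "j' < b" "(a, j') \<in> g1 Y" for a b i' j'
    proof -
      note hh = that
      show False
      proof (cases "b = K")
        case True
        then have "i' = R" using hh(4) P by blast
        then show False using colK[of a] hh(1) hh(3) True by simp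
      next
        case bK: False
        show False
        proof (cases "a = K")
          case True
          then show False using hh(6) R_ne_K by (auto simp: g1_mem)
        next
          case aK: False
          obtain i where i: "a = sig K i" using sig_surj aK by blast
          obtain j where j: "b = sig K j" using sig_surj bK by blast
          have cij: "(i, j) \<in> shifted_cells w3" using F3 hh(1) i j by blast
          have nij: "(i, j) \<notin> Y" using hh(2) i j g1_mem by blast
          from hh(4) bK obtain x y where xy: "i' = sig K x" "b = sig K y" "(x, y) \<in> Y" by (auto simp: g1_mem)
          have "y = j" using xy j by simp
          have "x < i" using xy i hh(3) by simp
          have "(a, j') \<noteq> kap"
          proof
            assume "(a, j') = kap"
            then have "a = R" "j' = K" by auto
            then show False using rowR[of b] hh(1) hh(5) by simp
          qed
          then obtain x' y' where x'y': "a = sig K x'" "j' = sig K y'" "(x', y') \<in> Y" using hh(6) g1_mem by blast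
          have "x' = i" using x'y' i by simp
          have "y' < j" using x'y' j hh(5) by simp
          show False using YE(3)[OF cij nij \<open>x < i\<close> _ \<open>y' < j\<close>] xy \<open>y = j\<close> x'y' \<open>x' = i\<close> by blast
        qed
      qed
    qed
    show "(i, j) \<notin> g1 Y" if "i < ncols w1" "(i, i) \<notin> g1 Y" for i j
    proof (cases "i = K")
      case True
      then show ?thesis using R_ne_K by (auto simp: g1_mem)
    next
      case False
      then obtain i0 where i0: "i = sig K i0" using sig_surj by blast
      have "i0 < ncols w3" using that(1) i0 nc sigK_lt_cc by simp
      moreover have "(i0, i0) \<notin> Y" using that(2) i0 g1_mem by blast
      ultimately have n: "\<And>y. (i0, y) \<notin> Y" using YE(4) by blast
      have "i \<noteq> R" using that(1) nc cc_le_R by simp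
      then show ?thesis using n i0 by (auto simp: g1_mem)
    qed
  qed
qed

lemma f1g1: "f1 (g1 Y) = Y"
proof -
  have "(i, j) \<in> f1 (g1 Y) \<longleftrightarrow> (i, j) \<in> Y" for i j
  proof -
    have "(sig K i, sig K j) \<noteq> kap" by simp
    then show ?thesis unfolding f1_mem g1_mem by simp
  qed
  then show ?thesis by auto
qed

lemma g1f1:
  assumes H: "is_typeB_tableau w1 H" and k: "kap \<in> H" and P: "\<forall>i. i \<noteq> R \<longrightarrow> (i, K) \<notin> H"
  shows "g1 (f1 H) = H"
proof (intro set_eqI iffI)
  fix p assume "p \<in> g1 (f1 H)"
  then show "p \<in> H" using k by (auto simp: g1_def f1_def)
next
  fix p assume p: "p \<in> H"
  obtain a b where ab: "p = (a, b)" by (cases p)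
  show "p \<in> g1 (f1 H)"
  proof (cases "p = kap")
    case True then show ?thesis by (simp add: g1_def)
  next
    case False
    have "b \<noteq> K" using P p ab False by blast
    moreover have "a \<noteq> K" using rowK_empty[OF H P] p ab by blast
    ultimately obtain i j where "a = sig K i" "b = sig K j" using sig_surj by metis
    then show ?thesis using p ab by (auto simp: g1_mem f1_mem)
  qed
qed

lemma dm13: "dm w1 (g1 Y) = dm w3 Y"
proof -
  have "{i. i < ncols w1 \<and> (i, i) \<in> g1 Y} = sig K ` {i. i < ncols w3 \<and> (i, i) \<in> Y}"
  proof (intro set_eqI iffI)
    fix i assume "i \<in> {i. i < ncols w1 \<and> (i, i) \<in> g1 Y}"
    then have i: "i < cc" "(i, i) \<in> g1 Y" using nc by simp_all
    have "(i, i) \<noteq> kap" using R_ne_K by simp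
    moreover have "(i, i) = kap \<or> (\<exists>x y. i = sig K x \<and> i = sig K y \<and> (x, y) \<in> Y)"
      using i(2) unfolding g1_mem .
    ultimately obtain x y where xy: "i = sig K x" "i = sig K y" "(x, y) \<in> Y" by blast
    from xy(1,2) have "sig K x = sig K y" by simp
    then have "x = y" by simp
    then have "(x, x) \<in> Y" using xy(3) by simp
    note xx = xy(1) this
    have "x < ncols w3" using i(1) xx(1) nc sigK_lt_cc by simp
    then show "i \<in> sig K ` {i. i < ncols w3 \<and> (i, i) \<in> Y}" using xx by blast
  next
    fix i assume "i \<in> sig K ` {i. i < ncols w3 \<and> (i, i) \<in> Y}"
    then obtain x where x: "i = sig K x" "x < ncols w3" "(x, x) \<in> Y" by blast
    then have "(i, i) \<in> g1 Y" using g1_mem by blast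
    moreover have "i < ncols w1" using x nc sigK_lt_cc by simp
    ultimately show "i \<in> {i. i < ncols w1 \<and> (i, i) \<in> g1 Y}" by simp
  qed
  moreover have "inj_on (sig K) {i. i < ncols w3 \<and> (i, i) \<in> Y}" by (rule inj_onI) simp
  ultimately have "card {i. i < ncols w1 \<and> (i, i) \<in> g1 Y} = card {i. i < ncols w3 \<and> (i, i) \<in> Y}"
    by (simp only: card_image)
  then show ?thesis unfolding dm_def .
qed

lemma NN_swap_loc: "NN w1 m = NN w2 m + NN w3 m + NN w4 m"
proof -
  let ?T = "{H. is_typeB_tableau w1 H \<and> dm w1 H = m}"
  let ?A1 = "{H \<in> ?T. kap \<in> H \<and> (\<forall>i. i \<noteq> R \<longrightarrow> (i, K) \<notin> H)}"
  let ?A2 = "{H \<in> ?T. kap \<notin> H}"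
  let ?A3 = "{H \<in> ?T. kap \<in> H \<and> \<not> (\<forall>i. i \<noteq> R \<longrightarrow> (i, K) \<notin> H)}"
  let ?B2 = "{Y. is_typeB_tableau w2 Y \<and> dm w2 Y = m}"
  let ?B3 = "{Y. is_typeB_tableau w3 Y \<and> dm w3 Y = m}"
  let ?B4 = "{Y. is_typeB_tableau w4 Y \<and> dm w4 Y = m}"
  have finT: "finite ?T" by (rule finite_subset[OF _ finite_tab[of w1]]) blast
  have eqT: "?T = ?A1 \<union> ?A2 \<union> ?A3" by blast
  have c1: "card ?A1 = card ?B3"
  proof (rule bij_betw_same_card[of f1])
    show "bij_betw f1 ?A1 ?B3"
    proof (rule bij_betw_byWitness[where f' = g1])
      show "\<forall>a\<in>?A1. g1 (f1 a) = a" using g1f1 by blast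
      show "\<forall>a\<in>?B3. f1 (g1 a) = a" using f1g1 by blast
      show "f1 ` ?A1 \<subseteq> ?B3"
      proof
        fix Y assume "Y \<in> f1 ` ?A1"
        then obtain H where H: "Y = f1 H" "H \<in> ?A1" by blast
        have "dm w3 (f1 H) = dm w1 (g1 (f1 H))" by (simp add: dm13)
        also have "\<dots> = m" using H g1f1 by simp
        finally show "Y \<in> ?B3" using H P1_fwd by blast
      qed
      show "g1 ` ?B3 \<subseteq> ?A1"
      proof
        fix H assume "H \<in> g1 ` ?B3"
        then obtain Y where Y: "H = g1 Y" "Y \<in> ?B3" by blast
        then show "H \<in> ?A1" using P1_bwd[of Y] dm13[of Y] by simp
      qed
    qed
  qed
  have c2: "card ?A2 = card ?B4"
  proof (rule bij_betw_same_card[of f2])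
    show "bij_betw f2 ?A2 ?B4"
    proof (rule bij_betw_byWitness[where f' = g2])
      show "\<forall>a\<in>?A2. g2 (f2 a) = a" using g2f2 by blast
      show "\<forall>a\<in>?B4. f2 (g2 a) = a" using f2g2 by blast
      show "f2 ` ?A2 \<subseteq> ?B4"
      proof
        fix Y assume "Y \<in> f2 ` ?A2"
        then obtain H where H: "Y = f2 H" "H \<in> ?A2" by blast
        have "dm w4 (f2 H) = dm w1 (g2 (f2 H))" by (simp add: dm14)
        also have "\<dots> = m" using H g2f2 by simp
        finally show "Y \<in> ?B4" using H P2_fwd by blast
      qed
      show "g2 ` ?B4 \<subseteq> ?A2"
      proof
        fix H assume "H \<in> g2 ` ?B4"
        then obtain Y where Y: "H = g2 Y" "Y \<in> ?B4" by blast
        then show "H \<in> ?A2" using P2_bwd[of Y] dm14[of Y] by simp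
      qed
    qed
  qed
  have c3: "card ?A3 = card ?B2"
  proof (rule bij_betw_same_card[of "\<lambda>H. H - {kap}"])
    show "bij_betw (\<lambda>H. H - {kap}) ?A3 ?B2"
    proof (rule bij_betw_byWitness[where f' = "insert kap"])
      show "\<forall>a\<in>?A3. insert kap (a - {kap}) = a" by blast
      show "\<forall>a\<in>?B2. insert kap a - {kap} = a"
      proof
        fix Y assume "Y \<in> ?B2"
        then have "kap \<notin> Y" using tabE(1)[of w2 Y] kappa_notin2 by blast
        then show "insert kap Y - {kap} = Y" by simp
      qed
      show "(\<lambda>H. H - {kap}) ` ?A3 \<subseteq> ?B2"
      proof
        fix Y assume "Y \<in> (\<lambda>H. H - {kap}) ` ?A3"
        then obtain H where H: "Y = H - {kap}" "H \<in> ?A3" by blast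
        then obtain i0 where "(i0, K) \<in> H" "i0 \<noteq> R" by blast
        then have "is_typeB_tableau w2 Y" using P3_fwd H by blast
        moreover have "dm w2 Y = m" using H dm12[of H] by simp
        ultimately show "Y \<in> ?B2" by simp
      qed
      show "insert kap ` ?B2 \<subseteq> ?A3"
      proof
        fix H assume "H \<in> insert kap ` ?B2"
        then obtain Y where Y: "H = insert kap Y" "Y \<in> ?B2" by blast
        then have kY: "kap \<notin> Y" using tabE(1)[of w2 Y] kappa_notin2 by blast
        have "dm w1 H = dm w2 (H - {kap})" by (rule dm12)
        also have "\<dots> = m" using Y kY by simp
        finally show "H \<in> ?A3" using P3_bwd[of Y] Y by auto
      qed
    qed
  qed
  have "card ?T = card ?A1 + card ?A2 + card ?A3"
  proof -
    have f1: "finite ?A1" "finite ?A2" "finite ?A3"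
      by (rule finite_subset[OF _ finT], blast)+
    have "card ?T = card (?A1 \<union> ?A2 \<union> ?A3)" by (rule arg_cong[OF eqT])
    also have "card (?A1 \<union> ?A2 \<union> ?A3) = card (?A1 \<union> ?A2) + card ?A3"
      by (rule card_Un_disjoint) (use f1 in auto)
    also have "card (?A1 \<union> ?A2) = card ?A1 + card ?A2"
      by (rule card_Un_disjoint) (use f1 in auto)
    finally show ?thesis .
  qed
  then show ?thesis unfolding NN_def using c1 c2 c3 by simp
qed

end

lemma NN_swap: "NN (u @ True # False # v) m = NN (u @ False # True # v) m + NN (u @ True # v) m + NN (u @ False # v) m"
  by (rule SW.NN_swap_loc)

fun Gs :: "bool list \<Rightarrow> nat \<Rightarrow> nat \<Rightarrow> nat" where
  "Gs u 0 m = NN u m"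
| "Gs u (Suc b) m = Gs (u @ [True]) b m + Gs (u @ [False]) b m"

lemma Gs_swap: "Gs (u @ True # False # y) b m = Gs (u @ False # True # y) b m + Gs (u @ True # y) b m + Gs (u @ False # y) b m"
proof (induction b arbitrary: y)
  case 0 then show ?case by (simp add: NN_swap)
next
  case (Suc b)
  have e: "\<And>z x. (u @ z # x # y) @ [True] = u @ z # x # (y @ [True])" "\<And>z x. (u @ z # x # y) @ [False] = u @ z # x # (y @ [False])"
     "\<And>z. (u @ z # y) @ [True] = u @ z # (y @ [True])" "\<And>z. (u @ z # y) @ [False] = u @ z # (y @ [False])" by simp_all
  show ?case by (simp only: Gs.simps e Suc.IH)
qed

lemma Gs_S: "Gs (u @ [True]) b m = Suc b * Gs u b m"
proof (induction b arbitrary: u)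
  case 0 then show ?case by (simp add: NN_snoc_S)
next
  case (Suc b)
  have 1: "Gs (u @ [True] @ [False]) b m = Gs (u @ [False] @ [True]) b m + Gs (u @ [True]) b m + Gs (u @ [False]) b m"
    using Gs_swap[where u=u and b=b and m=m and y="[]"] by simp
  have "Gs (u @ [True]) (Suc b) m = Gs ((u @ [True]) @ [True]) b m + Gs ((u @ [True]) @ [False]) b m" by simp
  also have "\<dots> = Suc b * Gs (u @ [True]) b m + Suc b * Gs (u @ [False]) b m + Gs (u @ [True]) b m + Gs (u @ [False]) b m"
    using 1 Suc.IH[of "u @ [True]"] Suc.IH[of "u @ [False]"] by simp
  also have "\<dots> = Suc (Suc b) * Gs u (Suc b) m" by (simp add: algebra_simps)
  finally show ?case .
qed

lemma Gs_W: "Gs (False # u) b m = m * Gs u b (m - 1) + m * Gs u b m"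
proof (induction b arbitrary: u)
  case 0 then show ?case by (simp add: NN_cons_W)
next
  case (Suc b)
  show ?case using Suc.IH[of "u @ [True]"] Suc.IH[of "u @ [False]"] by (simp add: algebra_simps)
qed

lemma Gs_nil: "Gs [] b m = fact b * (b choose m)"
proof (induction b arbitrary: m)
  case 0 then show ?case by (simp add: NN_nil)
next
  case (Suc b)
  have "Gs [] (Suc b) m = Suc b * Gs [] b m + (m * Gs [] b (m - 1) + m * Gs [] b m)"
    using Gs_S[of "[]" b m] Gs_W[of "[]" b m] by simp
  also have "\<dots> = fact (Suc b) * (Suc b choose m)"
  proof (cases m)
    case 0 then show ?thesis by (simp add: Suc.IH)
  next
    case (Suc m')
    have a: "(Suc b - m) * (Suc b choose m) = Suc b * (b choose m)"
      using binomial_absorb_comp[of "Suc b" m] by simp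
    have b: "(b choose m') + (b choose m) = Suc b choose m" using Suc by simp
    have "Suc b * (b choose m) + m * (b choose m') + m * (b choose m) = Suc b * (Suc b choose m)"
    proof (cases "m \<le> Suc b")
      case True
      have "Suc b * (b choose m) + m * (b choose m') + m * (b choose m) = (Suc b - m) * (Suc b choose m) + m * (Suc b choose m)"
      proof -
        have c: "m * (b choose m') + m * (b choose m) = m * (Suc b choose m)" using b by (metis add_mult_distrib2)
        show ?thesis using a c by linarith
      qed
      also have "\<dots> = Suc b * (Suc b choose m)" using True by (simp add: add_mult_distrib[symmetric])
      finally show ?thesis .
    next
      case False
      then have "b choose m' = 0" "b choose m = 0" "Suc b choose m = 0" using Suc by simp_all
      then show ?thesis by (simp only:)
    qed
    note E = this
    have "Suc b * Gs [] b m + (m * Gs [] b (m - 1) + m * Gs [] b m) = fact b * (Suc b * (b choose m) + m * (b choose m') + m * (b choose m))"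
      unfolding Suc.IH using Suc by (simp add: algebra_simps)
    also have "\<dots> = fact b * (Suc b * (Suc b choose m))" by (simp only: E)
    also have "\<dots> = fact (Suc b) * (Suc b choose m)" by (simp add: algebra_simps)
    finally show ?thesis .
  qed
  finally show ?case .
qed

lemma finite_len: "finite {u::bool list. length u = a}"
  using finite_lists_length_eq[of "UNIV :: bool set" a] by simp

lemma sum_lists_Suc:
  "(\<Sum>u\<in>{u::bool list. length u = Suc a}. f u) = (\<Sum>u\<in>{u. length u = a}. f (True # u)) + (\<Sum>u\<in>{u. length u = a}. f (False # u))"
proof -
  let ?A = "{u::bool list. length u = a}"
  have eq: "{u::bool list. length u = Suc a} = Cons True ` ?A \<union> Cons False ` ?A"
  proof
    show "{u::bool list. length u = Suc a} \<subseteq> Cons True ` ?A \<union> Cons False ` ?A"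
    proof
      fix u :: "bool list" assume "u \<in> {u. length u = Suc a}"
      then obtain x y where "u = x # y" "length y = a" by (auto simp: length_Suc_conv)
      then show "u \<in> Cons True ` ?A \<union> Cons False ` ?A" by (cases x) auto
    qed
  qed auto
  have "(\<Sum>u\<in>{u::bool list. length u = Suc a}. f u) = sum f (Cons True ` ?A) + sum f (Cons False ` ?A)"
    unfolding eq by (rule sum.union_disjoint) (auto simp: finite_len)
  also have "\<dots> = (\<Sum>u\<in>?A. f (True # u)) + (\<Sum>u\<in>?A. f (False # u))"
    by (simp add: sum.reindex)
  finally show ?thesis .
qed

lemma Gs_split: "Gs v (a + b) m = (\<Sum>u\<in>{u. length u = a}. Gs (v @ u) b m)"
proof (induction a arbitrary: v)
  case 0 then show ?case by simp
next
  case (Suc a)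
  have "Gs v (Suc a + b) m = Gs (v @ [True]) (a + b) m + Gs (v @ [False]) (a + b) m" by simp
  also have "\<dots> = (\<Sum>u\<in>{u. length u = Suc a}. Gs (v @ u) b m)"
    unfolding sum_lists_Suc Suc.IH by simp
  finally show ?case .
qed

lemma card_tab: "card {F. is_typeB_tableau w F} = (\<Sum>m\<le>length w. NN w m)"
proof -
  have "{F. is_typeB_tableau w F} = (\<Union>m\<in>{..length w}. {F. is_typeB_tableau w F \<and> dm w F = m})"
    using dm_le by auto
  moreover have "card (\<Union>m\<in>{..length w}. {F. is_typeB_tableau w F \<and> dm w F = m}) = (\<Sum>m\<le>length w. card {F. is_typeB_tableau w F \<and> dm w F = m})"
  proof (rule card_UN_disjoint)
    show "\<forall>i\<in>{..length w}. finite {F. is_typeB_tableau w F \<and> dm w F = i}"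
      using finite_tab[of w] by (auto elim: finite_subset[rotated])
  qed auto
  ultimately have "card {F. is_typeB_tableau w F} = (\<Sum>m\<le>length w. card {F. is_typeB_tableau w F \<and> dm w F = m})"
    by metis
  then show ?thesis by (simp add: NN_def)
qed

lemma card_typeB_sub:
  "card {t \<in> typeB_tableaux n. P (fst t)} = (\<Sum>w\<in>{w. length w = n \<and> P w}. card {F. is_typeB_tableau w F})"
proof -
  have "{t \<in> typeB_tableaux n. P (fst t)} = Sigma {w. length w = n \<and> P w} (\<lambda>w. {F. is_typeB_tableau w F})"
    by (auto simp: typeB_tableaux_def)
  moreover have "finite {w::bool list. length w = n \<and> P w}" by (rule finite_subset[OF _ finite_len[of n]]) auto
  ultimately show ?thesis by (simp add: card_SigmaI finite_tab)
qed

lemma Gs_W_int: "int (Gs (u @ [False]) b m) = int (Gs u (Suc b) m) - int (Suc b) * int (Gs u b m)"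
  using Gs_S[of u b m] by (simp add: algebra_simps)

lemma Gs_WW_int: "int (Gs (u @ [False, False]) b m) = int (Gs u (b + 2) m) - (2 * int b + 3) * int (Gs u (b + 1) m) + (int b + 1)^2 * int (Gs u b m)"
proof -
  have "int (Gs (u @ [False, False]) b m) = int (Gs ((u @ [False]) @ [False]) b m)" by simp
  also have "\<dots> = int (Gs (u @ [False]) (Suc b) m) - int (Suc b) * int (Gs (u @ [False]) b m)" by (rule Gs_W_int)
  also have "\<dots> = (int (Gs u (Suc (Suc b)) m) - int (Suc (Suc b)) * int (Gs u (Suc b) m))
                   - int (Suc b) * (int (Gs u (Suc b) m) - int (Suc b) * int (Gs u b m))"
    by (simp only: Gs_W_int)
  also have "\<dots> = int (Gs u (b + 2) m) - (2 * int b + 3) * int (Gs u (b + 1) m) + (int b + 1)^2 * int (Gs u b m)"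
    by (simp add: algebra_simps power2_eq_square)
  finally show ?thesis .
qed

lemma sum_choose_le: "j \<le> n \<Longrightarrow> (\<Sum>m\<le>n. j choose m) = 2 ^ j"
proof -
  assume "j \<le> n"
  then have "(\<Sum>m\<le>n. j choose m) = (\<Sum>m\<le>j. j choose m)"
    by (intro sum.mono_neutral_right) auto
  then show ?thesis by (simp add: choose_row_sum)
qed

definition Zc :: "nat \<Rightarrow> nat" where "Zc j = fact j * 2 ^ j"

lemma sum_Gs_total: "a + j \<le> n \<Longrightarrow> (\<Sum>m\<le>n. \<Sum>u\<in>{u. length u = a}. Gs u j m) = Zc (a + j)"
proof -
  assume h: "a + j \<le> n"
  have "(\<Sum>m\<le>n. \<Sum>u\<in>{u. length u = a}. Gs u j m) = (\<Sum>m\<le>n. Gs [] (a + j) m)"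
    using Gs_split[of "[]" a j] by simp
  also have "\<dots> = (\<Sum>m\<le>n. fact (a + j) * ((a + j) choose m))" by (simp add: Gs_nil)
  also have "\<dots> = fact (a + j) * 2 ^ (a + j)" using sum_choose_le[OF h] by (simp add: sum_distrib_left[symmetric])
  finally show ?thesis by (simp add: Zc_def)
qed

lemma total_count: "card (typeB_tableaux n) = Zc n"
proof -
  have "card (typeB_tableaux n) = card {t \<in> typeB_tableaux n. True}" by simp
  also have "\<dots> = (\<Sum>w\<in>{w. length w = n}. card {F. is_typeB_tableau w F})"
    using card_typeB_sub[of n "\<lambda>_. True"] by simp
  also have "\<dots> = (\<Sum>w\<in>{w. length w = n}. \<Sum>m\<le>n. NN w m)" by (simp add: card_tab)
  also have "\<dots> = (\<Sum>m\<le>n. \<Sum>w\<in>{w. length w = n}. Gs w 0 m)" by (simp add: sum.swap[of _ "{..n}"])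
  also have "\<dots> = Zc n" using sum_Gs_total[of n 0 n] by simp
  finally show ?thesis .
qed

lemma words_split:
  assumes "2 \<le> k" "k \<le> n"
  shows "{w::bool list. length w = n \<and> \<not> w ! (k - 1) \<and> \<not> w ! (k - 2)}
       = (\<lambda>(u, x). u @ [False, False] @ x) ` ({u. length u = k - 2} \<times> {x. length x = n - k})"
proof
  show "{w::bool list. length w = n \<and> \<not> w ! (k - 1) \<and> \<not> w ! (k - 2)} \<subseteq> (\<lambda>(u, x). u @ [False, False] @ x) ` ({u. length u = k - 2} \<times> {x. length x = n - k})"
  proof
    fix w :: "bool list" assume "w \<in> {w. length w = n \<and> \<not> w ! (k - 1) \<and> \<not> w ! (k - 2)}"
    then have w: "length w = n" "\<not> w ! (k - 1)" "\<not> w ! (k - 2)" by auto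
    have d1: "drop (k - 2) w = w ! (k - 2) # drop (Suc (k - 2)) w" using assms w by (intro Cons_nth_drop_Suc[symmetric]) auto
    have d2: "drop (Suc (k - 2)) w = w ! (k - 1) # drop k w" using assms w Cons_nth_drop_Suc[of "k - 1" w]
      by (simp add: Suc_diff_Suc numeral_2_eq_2)
    have "w = take (k - 2) w @ [False, False] @ drop k w"
      using d1 d2 w append_take_drop_id[of "k - 2" w] by simp
    moreover have "length (take (k - 2) w) = k - 2" "length (drop k w) = n - k" using w assms by auto
    ultimately show "w \<in> (\<lambda>(u, x). u @ [False, False] @ x) ` ({u. length u = k - 2} \<times> {x. length x = n - k})"
      by (intro image_eqI[of _ _ "(take (k - 2) w, drop k w)"]) auto
  qed
next
  show "(\<lambda>(u, x). u @ [False, False] @ x) ` ({u. length u = k - 2} \<times> {x. length x = n - k}) \<subseteq> {w::bool list. length w = n \<and> \<not> w ! (k - 1) \<and> \<not> w ! (k - 2)}"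
  proof
    fix w assume "w \<in> (\<lambda>(u, x). u @ [False, False] @ x) ` ({u::bool list. length u = k - 2} \<times> {x. length x = n - k})"
    then obtain u x where w: "w = u @ [False, False] @ x" "length u = k - 2" "length x = n - k" by auto
    have "k - 1 = Suc (length u)" using w assms by simp
    then show "w \<in> {w::bool list. length w = n \<and> \<not> w ! (k - 1) \<and> \<not> w ! (k - 2)}"
      using w assms by (auto simp: nth_append)
  qed
qed

lemma inj_split: "inj_on (\<lambda>(u, x). u @ [False, False] @ x) ({u::bool list. length u = a} \<times> {x. length x = b})"
  by (auto simp: inj_on_def)

lemma event_count:
  assumes "2 \<le> k" "k \<le> n"
  shows "int (card {t \<in> typeB_tableaux n. \<not> fst t ! (k - 1) \<and> \<not> fst t ! (k - 2)})
     = int (Zc n) - (2 * int (n - k) + 3) * int (Zc (n - 1)) + (int (n - k) + 1)^2 * int (Zc (n - 2))"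
proof -
  let ?U = "{u::bool list. length u = k - 2}" and ?X = "{x::bool list. length x = n - k}"
  let ?b = "n - k"
  have "card {t \<in> typeB_tableaux n. \<not> fst t ! (k - 1) \<and> \<not> fst t ! (k - 2)}
      = (\<Sum>w\<in>{w. length w = n \<and> \<not> w ! (k - 1) \<and> \<not> w ! (k - 2)}. card {F. is_typeB_tableau w F})"
    using card_typeB_sub[of n "\<lambda>w. \<not> w ! (k - 1) \<and> \<not> w ! (k - 2)"] by simp
  also have "\<dots> = (\<Sum>p\<in>?U \<times> ?X. card {F. is_typeB_tableau ((\<lambda>(u, x). u @ [False, False] @ x) p) F})"
    unfolding words_split[OF assms] by (subst sum.reindex[OF inj_split]) (auto simp: o_def intro!: sum.cong)
  also have "\<dots> = (\<Sum>u\<in>?U. \<Sum>x\<in>?X. card {F. is_typeB_tableau (u @ [False, False] @ x) F})"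
    by (subst sum.cartesian_product) (auto intro!: sum.cong)
  also have "\<dots> = (\<Sum>u\<in>?U. \<Sum>x\<in>?X. \<Sum>m\<le>n. NN (u @ [False, False] @ x) m)"
  proof (intro sum.cong refl)
    fix u x assume "u \<in> ?U" "x \<in> ?X"
    then have "length (u @ [False, False] @ x) = n" using assms by simp
    then show "card {F. is_typeB_tableau (u @ [False, False] @ x) F} = (\<Sum>m\<le>n. NN (u @ [False, False] @ x) m)"
      by (metis card_tab)
  qed
  also have "\<dots> = (\<Sum>m\<le>n. \<Sum>u\<in>?U. Gs (u @ [False, False]) ?b m)"
  proof -
    have "\<And>u. Gs (u @ [False, False]) ?b m = (\<Sum>x\<in>?X. NN (u @ [False, False] @ x) m)" for m
      using Gs_split[of "_ @ [False, False]" ?b 0 m] by simp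
    then show ?thesis by (simp add: sum.swap[of _ "{..n}"] sum.swap[of _ "{..n}" ?X])
  qed
  finally have "int (card {t \<in> typeB_tableaux n. \<not> fst t ! (k - 1) \<and> \<not> fst t ! (k - 2)})
     = (\<Sum>m\<le>n. \<Sum>u\<in>?U. int (Gs (u @ [False, False]) ?b m))" by simp
  also have "\<dots> = (\<Sum>m\<le>n. \<Sum>u\<in>?U. int (Gs u (?b + 2) m) - (2 * int ?b + 3) * int (Gs u (?b + 1) m) + (int ?b + 1)^2 * int (Gs u ?b m))"
    by (simp only: Gs_WW_int)
  also have "\<dots> = int (\<Sum>m\<le>n. \<Sum>u\<in>?U. Gs u (?b + 2) m) - (2 * int ?b + 3) * int (\<Sum>m\<le>n. \<Sum>u\<in>?U. Gs u (?b + 1) m) + (int ?b + 1)^2 * int (\<Sum>m\<le>n. \<Sum>u\<in>?U. Gs u ?b m)"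
    by (simp add: sum.distrib sum_subtractf sum_distrib_left del: Gs.simps)
  also have "\<dots> = int (Zc n) - (2 * int ?b + 3) * int (Zc (n - 1)) + (int ?b + 1)^2 * int (Zc (n - 2))"
  proof -
    have i1: "k - 2 + (n - k + 2) = n" and i2: "k - 2 + (n - k + 1) = n - 1" and i3: "k - 2 + (n - k) = n - 2"
      using assms by auto
    show ?thesis
      using sum_Gs_total[of "k - 2" "?b + 2" n, unfolded i1] sum_Gs_total[of "k - 2" "?b + 1" n, unfolded i2]
        sum_Gs_total[of "k - 2" "?b" n, unfolded i3]
      by (simp del: Gs.simps)
  qed
  finally show ?thesis .
qed

lemma key: "\<And>N K z::real. z > 0 \<Longrightarrow> N > 1 \<Longrightarrow>
     (4 * N * (N - 1) * z - (2 * (N - K) + 3) * (2 * (N - 1) * z) + (N - K + 1)^2 * z) / (4 * N * (N - 1) * z)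
     = K / N - 3 / (2 * N) + (N - K + 1) ^ 2 / (4 * N * (N - 1))"
proof -
  fix N K z :: real assume z: "z > 0" and N: "N > 1"
  have d: "4 * N * (N - 1) * z \<noteq> 0" "N \<noteq> 0" "N - 1 \<noteq> 0" using z N by auto
  have "(4 * N * (N - 1) * z - (2 * (N - K) + 3) * (2 * (N - 1) * z) + (N - K + 1)^2 * z) / (4 * N * (N - 1) * z)
     = (4 * N * (N - 1) - (2 * (N - K) + 3) * (2 * (N - 1)) + (N - K + 1)^2) / (4 * N * (N - 1))"
  proof -
    have "4 * N * (N - 1) * z - (2 * (N - K) + 3) * (2 * (N - 1) * z) + (N - K + 1)^2 * z
      = (4 * N * (N - 1) - (2 * (N - K) + 3) * (2 * (N - 1)) + (N - K + 1)^2) * z" by (simp add: algebra_simps)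
    then show ?thesis using z by simp
  qed
  also have "\<dots> = K / N - 3 / (2 * N) + (N - K + 1) ^ 2 / (4 * N * (N - 1))"
    using d by (simp add: field_simps)
  finally show "?thesis N K z" .
qed

theorem mainTheorem10:
  fixes n k :: nat
  assumes "2 \<le> k" and "k \<le> n"
  shows "prob_B n (\<lambda>(w, F). west_step w k \<and> west_step w (k - 1))
    = real k / real n - 3 / (2 * real n)
      + (real n - real k + 1) ^ 2 / (4 * real n * (real n - 1))"
proof -
  have n2: "n \<ge> 2" using assms by simp
  have ev: "{t \<in> typeB_tableaux n. (\<lambda>(w, F). west_step w k \<and> west_step w (k - 1)) t}
       = {t \<in> typeB_tableaux n. \<not> fst t ! (k - 1) \<and> \<not> fst t ! (k - 2)}"
    by (auto simp: west_step_def numeral_2_eq_2)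
  define z where "z = real (Zc (n - 2))"
  have z: "z > 0" by (simp add: z_def Zc_def)
  have ZS: "\<And>j. real (Zc (Suc j)) = 2 * real (Suc j) * real (Zc j)"
    by (simp add: Zc_def algebra_simps)
  have Z1: "real (Zc (n - 1)) = 2 * (real n - 1) * z"
  proof -
    have e: "n - 1 = Suc (n - 2)" using n2 by simp
    have "real (Suc (n - 2)) = real n - 1" using n2 by (simp add: of_nat_diff)
    then show ?thesis unfolding e ZS z_def by simp
  qed
  have Z0: "real (Zc n) = 4 * real n * (real n - 1) * z"
  proof -
    have e: "n = Suc (n - 1)" using n2 by simp
    have "real (Zc n) = 2 * real (Suc (n - 1)) * real (Zc (n - 1))" by (subst e, rule ZS)
    also have "\<dots> = 2 * real n * (2 * (real n - 1) * z)" using e Z1 by simp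
    finally show ?thesis by simp
  qed
  have E: "real (card {t \<in> typeB_tableaux n. \<not> fst t ! (k - 1) \<and> \<not> fst t ! (k - 2)})
     = real (Zc n) - (2 * (real n - real k) + 3) * real (Zc (n - 1)) + (real n - real k + 1)^2 * real (Zc (n - 2))"
  proof -
    have "real_of_int (int (card {t \<in> typeB_tableaux n. \<not> fst t ! (k - 1) \<and> \<not> fst t ! (k - 2)}))
      = real_of_int (int (Zc n) - (2 * int (n - k) + 3) * int (Zc (n - 1)) + (int (n - k) + 1)^2 * int (Zc (n - 2)))"
      using event_count[OF assms] by simp
    then show ?thesis using assms by (simp add: of_nat_diff)
  qed
  have nn: "real n > 1" using n2 by simp
  show ?thesis
    unfolding prob_B_def ev total_count E Z1 Z0 z_def[symmetric]
    using key[OF z nn] by simp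
qed


end
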